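(* For every positive integer $n$, the class $\mathcal K_n^*$ has the Ramsey property.
   Context: For relational structures $\mathbf A,\mathbf B$ in the same language, $\binom{\mathbf B}{\mathbf A}$ denotes the set of substructures of $\mathbf B$ isomorphic to $\mathbf A$. For $k\ge 1$, $\mathbf C\to(\mathbf B)^{\mathbf A}_k$ means: for every map $c:\binom{\mathbf C}{\mathbf A}\to[k]=\{0,\dots,k-1\}$ there is $\mathbf B'\in\binom{\mathbf C}{\mathbf B}$ such that $c$ is constant on $\binom{\mathbf B'}{\mathbf A}$. A class $\mathcal K$ of finite structures has the Ramsey property if for all $k\ge1$ and all $\mathbf A,\mathbf B\in\mathcal K$ there is $\mathbf C\in\mathcal K$ with $\mathbf C\to(\mathbf B)^{\mathbf A}_k$. A directed graph $(A,E)$ ($E$ irreflexive and asymmetric) is complete multipartite if the relation "$u=v$, or neither $E(u,v)$ nor $E(v,u)$" is an equivalence relation on $A$; its classes are called the parts (so any two vertices in different parts are joined by exactly one directed edge, and there are no edges inside a part). $\mathcal K_n^*$ is the class of finite structures $(A,E,P_0,\dots,P_{n-1},<)$ such that $(A,E)$ is a complete multipartite directed graph with at most $n$ parts, $P_0,\dots,P_{n-1}$ are pairwise disjoint subsets of $A$ each of which is either empty or a part, every part equals some $P_i$, and $<$ is a linear order on $A$ such that every element of $P_i$ is below every element of $P_j$ whenever $i<j$. (This is the age of the expansion $n*I_\omega^*$ of the generic complete $n$-partite directed graph by unary predicates naming the parts and a convex linear order.) *)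

theory Defs
  imports Main
begin

text \<open>Carriers are finite
subsets of nat (every finite structure is isomorphic to such a one, and all notions
below are isomorphism invariant). All relations are only ever inspected on the carrier.\<close>

record struc =
  univ :: "nat set"
  edge :: "nat \<Rightarrow> nat \<Rightarrow> bool"
  pred :: "nat \<Rightarrow> nat set"
  less :: "nat \<Rightarrow> nat \<Rightarrow> bool"

definition induced :: "struc \<Rightarrow> nat set \<Rightarrow> struc" where
  "induced B S = B\<lparr>univ := S, pred := (\<lambda>i. pred B i \<inter> S)\<rparr>"

definition is_iso :: "nat \<Rightarrow> struc \<Rightarrow> struc \<Rightarrow> (nat \<Rightarrow> nat) \<Rightarrow> bool" where
  "is_iso n A B f \<longleftrightarrow> bij_betw f (univ A) (univ B) \<and>
     (\<forall>x\<in>univ A. \<forall>y\<in>univ A. edge A x y \<longleftrightarrow> edge B (f x) (f y)) \<and>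
     (\<forall>x\<in>univ A. \<forall>y\<in>univ A. less A x y \<longleftrightarrow> less B (f x) (f y)) \<and>
     (\<forall>i<n. \<forall>x\<in>univ A. x \<in> pred A i \<longleftrightarrow> f x \<in> pred B i)"

definition isomorphic :: "nat \<Rightarrow> struc \<Rightarrow> struc \<Rightarrow> bool" where
  "isomorphic n A B \<longleftrightarrow> (\<exists>f. is_iso n A B f)"

text \<open>binom C A: the substructures of C isomorphic to A, represented by their
underlying sets (a substructure is determined by its underlying set).\<close>
definition binom :: "nat \<Rightarrow> struc \<Rightarrow> struc \<Rightarrow> nat set set" where
  "binom n C A = {S. S \<subseteq> univ C \<and> isomorphic n A (induced C S)}"

definition arrows :: "nat \<Rightarrow> struc \<Rightarrow> struc \<Rightarrow> struc \<Rightarrow> nat \<Rightarrow> bool" where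
  "arrows n C B A k \<longleftrightarrow>
     (\<forall>c :: nat set \<Rightarrow> nat. (\<forall>S\<in>binom n C A. c S < k) \<longrightarrow>
        (\<exists>B'\<in>binom n C B. \<exists>j. \<forall>S\<in>binom n (induced C B') A. c S = j))"

definition ramsey_property :: "nat \<Rightarrow> struc set \<Rightarrow> bool" where
  "ramsey_property n K \<longleftrightarrow>
     (\<forall>k\<ge>1. \<forall>A\<in>K. \<forall>B\<in>K. \<exists>C\<in>K. arrows n C B A k)"

definition part_of :: "struc \<Rightarrow> nat \<Rightarrow> nat set" where
  "part_of A x = {y\<in>univ A. x = y \<or> (\<not> edge A x y \<and> \<not> edge A y x)}"

definition complete_multipartite :: "struc \<Rightarrow> bool" where
  "complete_multipartite A \<longleftrightarrow>
     (\<forall>x\<in>univ A. \<not> edge A x x) \<and>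
     (\<forall>x\<in>univ A. \<forall>y\<in>univ A. edge A x y \<longrightarrow> \<not> edge A y x) \<and>
     (\<forall>x\<in>univ A. \<forall>y\<in>univ A. \<forall>z\<in>univ A.
        (x = y \<or> (\<not> edge A x y \<and> \<not> edge A y x)) \<longrightarrow>
        (y = z \<or> (\<not> edge A y z \<and> \<not> edge A z y)) \<longrightarrow>
        (x = z \<or> (\<not> edge A x z \<and> \<not> edge A z x)))"

definition Kstar :: "nat \<Rightarrow> struc set" where
  "Kstar n = {A. finite (univ A) \<and> complete_multipartite A \<and>
     (\<forall>i<n. pred A i \<subseteq> univ A) \<and>
     (\<forall>i<n. \<forall>j<n. i \<noteq> j \<longrightarrow> pred A i \<inter> pred A j = {}) \<and>
     (\<forall>i<n. pred A i = {} \<or> (\<exists>x\<in>univ A. pred A i = part_of A x)) \<and>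
     (\<forall>x\<in>univ A. \<exists>i<n. part_of A x = pred A i) \<and>
     (\<forall>x\<in>univ A. \<not> less A x x) \<and>
     (\<forall>x\<in>univ A. \<forall>y\<in>univ A. \<forall>z\<in>univ A. less A x y \<longrightarrow> less A y z \<longrightarrow> less A x z) \<and>
     (\<forall>x\<in>univ A. \<forall>y\<in>univ A. x = y \<or> less A x y \<or> less A y x) \<and>
     (\<forall>i<n. \<forall>j<n. i < j \<longrightarrow> (\<forall>x\<in>pred A i. \<forall>y\<in>pred A j. less A x y))}"

end

theory Submission
  imports Defs "HOL-Library.Countable" "HOL-Library.FuncSet" "HOL-Library.Ramsey"
begin

definition W :: "nat \<Rightarrow> nat \<Rightarrow> nat list set" where
  "W m N = {w. length w = N \<and> set w \<subseteq> {..<m}}"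

definition is_line :: "nat \<Rightarrow> nat \<Rightarrow> nat option list \<Rightarrow> bool" where
  "is_line m N L \<longleftrightarrow> length L = N \<and> None \<in> set L \<and> (\<forall>a. Some a \<in> set L \<longrightarrow> a < m)"

definition lap :: "nat option list \<Rightarrow> nat \<Rightarrow> nat list" where
  "lap L j = map (case_option j id) L"

definition HJP :: "nat \<Rightarrow> nat \<Rightarrow> nat \<Rightarrow> bool" where
  "HJP m k N \<longleftrightarrow> (\<forall>\<chi>::nat list \<Rightarrow> nat. card (\<chi> ` W m N) \<le> k \<longrightarrow>
      (\<exists>L. is_line m N L \<and> (\<forall>i<m. \<chi> (lap L i) = \<chi> (lap L 0))))"

lemma finite_W: "finite (W m N)"
proof -
  have "W m N = {xs. set xs \<subseteq> {..<m} \<and> length xs = N}" by (auto simp: W_def)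
  then show ?thesis using finite_lists_length_eq[of "{..<m}" N] by simp
qed

lemma lap_append[simp]: "lap (L @ L') j = lap L j @ lap L' j"
  by (simp add: lap_def)

lemma lap_Some[simp]: "lap (map Some f) j = f"
  by (induct f) (auto simp: lap_def)

lemma length_lap[simp]: "length (lap L j) = length L"
  by (simp add: lap_def)

lemma lap_W: "is_line m N L \<Longrightarrow> j < m \<Longrightarrow> lap L j \<in> W m N"
  by (auto simp: W_def is_line_def lap_def split: option.splits)

lemma W_append: "u \<in> W m N \<Longrightarrow> v \<in> W m' N' \<Longrightarrow> m' \<le> m \<Longrightarrow> u @ v \<in> W m (N + N')"
  by (auto simp: W_def)

lemma W_mono: "v \<in> W m' N \<Longrightarrow> m' \<le> m \<Longrightarrow> v \<in> W m N"
  by (auto simp: W_def)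

lemma is_line_append: "is_line m N L \<Longrightarrow> is_line m N' L' \<Longrightarrow> is_line m (N + N') (L @ L')"
  by (auto simp: is_line_def)

lemma is_line_append_Some: "is_line m N L \<Longrightarrow> f \<in> W m N' \<Longrightarrow> is_line m (N + N') (L @ map Some f)"
  by (auto simp: is_line_def W_def)

lemma is_line_Some_append: "is_line m N' L \<Longrightarrow> f \<in> W m N \<Longrightarrow> is_line m (N + N') (map Some f @ L)"
  by (auto simp: is_line_def W_def)

lemma is_line_mono: "is_line m' N L \<Longrightarrow> m' \<le> m \<Longrightarrow> is_line m N L"
  by (auto simp: is_line_def)

lemma HJ_base: "HJP 1 k 1"
  unfolding HJP_def
  by (intro allI impI exI[of _ "[None]"]) (auto simp: is_line_def)

definition FC :: "nat \<Rightarrow> nat \<Rightarrow> nat \<Rightarrow> nat \<Rightarrow> bool" where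
  "FC m k r N \<longleftrightarrow> (\<forall>\<chi>::nat list \<Rightarrow> nat. card (\<chi> ` W (Suc m) N) \<le> k \<longrightarrow>
      (\<exists>L. is_line (Suc m) N L \<and> (\<forall>i<Suc m. \<chi> (lap L i) = \<chi> (lap L 0))) \<or>
      (\<exists>Ls f. length Ls = r \<and> f \<in> W (Suc m) N \<and>
         (\<forall>L\<in>set Ls. is_line (Suc m) N L \<and> lap L m = f \<and> (\<forall>i<m. \<chi> (lap L i) = \<chi> (lap L 0))) \<and>
         distinct (map (\<lambda>L. \<chi> (lap L 0)) Ls)))"

lemma FC_0: "FC m k 0 0"
  unfolding FC_def by (intro allI impI disjI2 exI[of _ "[]"] exI[of _ "[]"]) (auto simp: W_def)

lemma FC_step:
  assumes m: "m \<ge> 1" and HJm: "\<And>K. \<exists>N. HJP m K N" and FCr: "FC m k r Nr"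
  shows "\<exists>N. FC m k (Suc r) N"
proof -
  obtain ul where ul: "set ul = W (Suc m) Nr" "distinct ul"
    using finite_distinct_list[OF finite_W] by blast
  obtain N' where N': "HJP m (k ^ length ul) N'" using HJm by blast
  show ?thesis
  proof (rule exI[of _ "Nr + N'"], unfold FC_def, intro allI impI)
    fix \<chi> :: "nat list \<Rightarrow> nat"
    assume card: "card (\<chi> ` W (Suc m) (Nr + N')) \<le> k"
    define \<chi>2 where "\<chi>2 v = to_nat (map (\<lambda>u. \<chi> (u @ v)) ul)" for v
    have "\<chi>2 ` W m N' \<subseteq> to_nat ` {xs. set xs \<subseteq> \<chi> ` W (Suc m) (Nr + N') \<and> length xs = length ul}"
    proof
      fix y assume "y \<in> \<chi>2 ` W m N'"
      then obtain v where v: "v \<in> W m N'" "y = \<chi>2 v" by blast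
      have "set (map (\<lambda>u. \<chi> (u @ v)) ul) \<subseteq> \<chi> ` W (Suc m) (Nr + N')"
        using v(1) ul(1) by (auto intro!: imageI W_append)
      then show "y \<in> to_nat ` {xs. set xs \<subseteq> \<chi> ` W (Suc m) (Nr + N') \<and> length xs = length ul}"
        using v by (auto simp: \<chi>2_def)
    qed
    then have "card (\<chi>2 ` W m N') \<le> card (to_nat ` {xs. set xs \<subseteq> \<chi> ` W (Suc m) (Nr + N') \<and> length xs = length ul})"
      by (intro card_mono finite_imageI finite_lists_length_eq finite_imageI finite_W)
    also have "\<dots> \<le> card {xs. set xs \<subseteq> \<chi> ` W (Suc m) (Nr + N') \<and> length xs = length ul}"
      by (rule card_image_le) (intro finite_lists_length_eq finite_imageI finite_W)
    also have "\<dots> = card (\<chi> ` W (Suc m) (Nr + N')) ^ length ul"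
      by (rule card_lists_length_eq) (intro finite_imageI finite_W)
    also have "\<dots> \<le> k ^ length ul" using card by (simp add: power_mono)
    finally have card2: "card (\<chi>2 ` W m N') \<le> k ^ length ul" .
    have "\<exists>L. is_line m N' L \<and> (\<forall>i<m. \<chi>2 (lap L i) = \<chi>2 (lap L 0))"
      by (rule N'[unfolded HJP_def, THEN spec, THEN mp, OF card2])
    then obtain ll where ll: "is_line m N' ll" "\<forall>i<m. \<chi>2 (lap ll i) = \<chi>2 (lap ll 0)"
      by (elim exE conjE)
    have lleq: "\<chi> (u @ lap ll i) = \<chi> (u @ lap ll 0)" if "u \<in> W (Suc m) Nr" "i < m" for u i
    proof -
      have "\<chi>2 (lap ll i) = \<chi>2 (lap ll 0)" using ll(2) that(2) by blast
      then have "map (\<lambda>u. \<chi> (u @ lap ll i)) ul = map (\<lambda>u. \<chi> (u @ lap ll 0)) ul"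
        unfolding \<chi>2_def by (rule injD[OF inj_to_nat])
      then show ?thesis using that(1) ul(1) unfolding map_eq_conv by blast
    qed
    have l0W: "lap ll 0 \<in> W (Suc m) N'" by (rule W_mono[OF lap_W[OF ll(1)]]) (use m in auto)
    have ll1: "is_line (Suc m) N' ll" using ll(1) by (auto intro: is_line_mono)
    have lmW: "lap ll m \<in> W (Suc m) N'" using lap_W[OF ll1] by simp
    define \<chi>' where "\<chi>' u = \<chi> (u @ lap ll 0)" for u
    have "\<chi>' ` W (Suc m) Nr \<subseteq> \<chi> ` W (Suc m) (Nr + N')"
      using l0W by (auto simp: \<chi>'_def intro!: imageI W_append)
    then have "card (\<chi>' ` W (Suc m) Nr) \<le> k"
      using card card_mono[OF finite_imageI[OF finite_W]] by (meson le_trans)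
    note cardc = this
    have disj: "(\<exists>L. is_line (Suc m) Nr L \<and> (\<forall>i<Suc m. \<chi>' (lap L i) = \<chi>' (lap L 0))) \<or>
      (\<exists>Ls f. length Ls = r \<and> f \<in> W (Suc m) Nr \<and>
         (\<forall>L\<in>set Ls. is_line (Suc m) Nr L \<and> lap L m = f \<and> (\<forall>i<m. \<chi>' (lap L i) = \<chi>' (lap L 0))) \<and>
         distinct (map (\<lambda>L. \<chi>' (lap L 0)) Ls))"
      by (rule FCr[unfolded FC_def, THEN spec, THEN mp, OF cardc])
    consider
        (mono) L where "is_line (Suc m) Nr L" "\<forall>i<Suc m. \<chi>' (lap L i) = \<chi>' (lap L 0)"
      | (foc) Ls f where "length Ls = r" "f \<in> W (Suc m) Nr"
         "\<forall>L\<in>set Ls. is_line (Suc m) Nr L \<and> lap L m = f \<and> (\<forall>i<m. \<chi>' (lap L i) = \<chi>' (lap L 0))"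
         "distinct (map (\<lambda>L. \<chi>' (lap L 0)) Ls)"
      using disj by metis
    then show "(\<exists>L. is_line (Suc m) (Nr + N') L \<and> (\<forall>i<Suc m. \<chi> (lap L i) = \<chi> (lap L 0))) \<or>
         (\<exists>Ls f. length Ls = Suc r \<and> f \<in> W (Suc m) (Nr + N') \<and>
         (\<forall>L\<in>set Ls. is_line (Suc m) (Nr + N') L \<and> lap L m = f \<and> (\<forall>i<m. \<chi> (lap L i) = \<chi> (lap L 0))) \<and>
         distinct (map (\<lambda>L. \<chi> (lap L 0)) Ls))"
    proof cases
      case mono
      have "\<forall>i<Suc m. \<chi> (lap L i @ lap ll 0) = \<chi> (lap L 0 @ lap ll 0)"
        using mono(2) unfolding \<chi>'_def .
      then have "is_line (Suc m) (Nr + N') (L @ map Some (lap ll 0)) \<and>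
          (\<forall>i<Suc m. \<chi> (lap (L @ map Some (lap ll 0)) i) = \<chi> (lap (L @ map Some (lap ll 0)) 0))"
        unfolding lap_append lap_Some using is_line_append_Some[OF mono(1) l0W] by blast
      then show ?thesis by blast
    next
      case foc
      show ?thesis
      proof (cases "\<exists>L\<in>set Ls. \<chi>' f = \<chi>' (lap L 0)")
        case True
        then obtain L where L: "L \<in> set Ls" "\<chi>' f = \<chi>' (lap L 0)" by blast
        have Lp: "is_line (Suc m) Nr L" "lap L m = f" "\<forall>i<m. \<chi>' (lap L i) = \<chi>' (lap L 0)"
          using foc(3) L(1) by blast+
        have "\<forall>i<Suc m. \<chi>' (lap L i) = \<chi>' (lap L 0)"
        proof (intro allI impI)
          fix i assume "i < Suc m"
          then consider "i < m" | "i = m" by linarith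
          then show "\<chi>' (lap L i) = \<chi>' (lap L 0)"
          proof cases
            case 1 then show ?thesis using Lp(3) by blast
          next
            case 2 then show ?thesis using Lp(2) L(2) by simp
          qed
        qed
        then have "\<forall>i<Suc m. \<chi> (lap L i @ lap ll 0) = \<chi> (lap L 0 @ lap ll 0)"
          unfolding \<chi>'_def .
        then have "is_line (Suc m) (Nr + N') (L @ map Some (lap ll 0)) \<and>
            (\<forall>i<Suc m. \<chi> (lap (L @ map Some (lap ll 0)) i) = \<chi> (lap (L @ map Some (lap ll 0)) 0))"
          unfolding lap_append lap_Some using is_line_append_Some[OF Lp(1) l0W] by blast
        then show ?thesis by blast
      next
        case False
        define Ls' where "Ls' = map (\<lambda>L. L @ ll) Ls @ [map Some f @ ll]"
        have "map (\<lambda>L. \<chi> (lap L 0)) Ls' = map (\<lambda>L. \<chi>' (lap L 0)) Ls @ [\<chi>' f]"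
          unfolding Ls'_def \<chi>'_def by simp
        then have dist: "distinct (map (\<lambda>L. \<chi> (lap L 0)) Ls')"
          using foc(4) False by auto
        have lines: "is_line (Suc m) (Nr + N') L' \<and> lap L' m = f @ lap ll m \<and>
             (\<forall>i<m. \<chi> (lap L' i) = \<chi> (lap L' 0))" if L'in: "L' \<in> set Ls'" for L'
        proof -
          from L'in consider (old) L where "L \<in> set Ls" "L' = L @ ll" | (new) "L' = map Some f @ ll"
            unfolding Ls'_def by auto
          then show ?thesis
          proof cases
            case old
            have Lp: "is_line (Suc m) Nr L" "lap L m = f" "\<forall>i<m. \<chi>' (lap L i) = \<chi>' (lap L 0)"
              using foc(3) old(1) by blast+
            have "\<chi> (lap L i @ lap ll i) = \<chi> (lap L 0 @ lap ll 0)" if "i < m" for i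
            proof -
              have "lap L i \<in> W (Suc m) Nr" using lap_W[OF Lp(1), of i] that by linarith
              then have "\<chi> (lap L i @ lap ll i) = \<chi> (lap L i @ lap ll 0)"
                using lleq that by blast
              also have "\<dots> = \<chi>' (lap L i)" by (simp add: \<chi>'_def)
              also have "\<dots> = \<chi>' (lap L 0)" using Lp(3) that by blast
              finally show ?thesis by (simp add: \<chi>'_def)
            qed
            then show ?thesis using Lp(2) is_line_append[OF Lp(1) ll1] unfolding old(2) lap_append by blast
          next
            case new
            have "\<chi> (f @ lap ll i) = \<chi> (f @ lap ll 0)" if "i < m" for i
              using lleq[OF foc(2) that] .
            then show ?thesis using is_line_Some_append[OF ll1 foc(2)] unfolding new lap_append lap_Some by blast
          qed
        qed
        have fW: "f @ lap ll m \<in> W (Suc m) (Nr + N')"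
          using W_append[OF foc(2) lmW] by simp
        have "length Ls' = Suc r" using foc(1) by (simp add: Ls'_def)
        then show ?thesis
          using dist lines fW by blast
      qed
    qed
  qed
qed

lemma FC_all:
  assumes m: "m \<ge> 1" and HJm: "\<And>K. \<exists>N. HJP m K N"
  shows "\<exists>N. FC m k r N"
proof (induct r)
  case 0 then show ?case using FC_0 by blast
next
  case (Suc r)
  then obtain N where "FC m k r N" by blast
  then show ?case by (rule FC_step[OF m HJm])
qed

lemma HJ_step:
  assumes m: "m \<ge> 1" and HJm: "\<And>K. \<exists>N. HJP m K N"
  shows "\<exists>N. HJP (Suc m) k N"
proof -
  obtain N where N: "FC m k k N" using FC_all[OF m HJm] by blast
  show ?thesis
  proof (rule exI[of _ N], unfold HJP_def, intro allI impI)
    fix \<chi> :: "nat list \<Rightarrow> nat"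
    assume card: "card (\<chi> ` W (Suc m) N) \<le> k"
    have disj: "(\<exists>L. is_line (Suc m) N L \<and> (\<forall>i<Suc m. \<chi> (lap L i) = \<chi> (lap L 0))) \<or>
      (\<exists>Ls f. length Ls = k \<and> f \<in> W (Suc m) N \<and>
         (\<forall>L\<in>set Ls. is_line (Suc m) N L \<and> lap L m = f \<and> (\<forall>i<m. \<chi> (lap L i) = \<chi> (lap L 0))) \<and>
         distinct (map (\<lambda>L. \<chi> (lap L 0)) Ls))"
      by (rule N[unfolded FC_def, THEN spec, THEN mp, OF card])
    consider
        (mono) L where "is_line (Suc m) N L" "\<forall>i<Suc m. \<chi> (lap L i) = \<chi> (lap L 0)"
      | (foc) Ls f where "length Ls = k" "f \<in> W (Suc m) N"
         "\<forall>L\<in>set Ls. is_line (Suc m) N L \<and> lap L m = f \<and> (\<forall>i<m. \<chi> (lap L i) = \<chi> (lap L 0))"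
         "distinct (map (\<lambda>L. \<chi> (lap L 0)) Ls)"
      using disj by metis
    then show "\<exists>L. is_line (Suc m) N L \<and> (\<forall>i<Suc m. \<chi> (lap L i) = \<chi> (lap L 0))"
    proof cases
      case mono then show ?thesis by blast
    next
      case foc
      show ?thesis
      proof (cases "\<exists>L\<in>set Ls. \<chi> f = \<chi> (lap L 0)")
        case True
        then obtain L where L: "L \<in> set Ls" "\<chi> f = \<chi> (lap L 0)" by blast
        have Lp: "is_line (Suc m) N L" "lap L m = f" "\<forall>i<m. \<chi> (lap L i) = \<chi> (lap L 0)"
          using foc(3) L(1) by blast+
        have "\<forall>i<Suc m. \<chi> (lap L i) = \<chi> (lap L 0)"
        proof (intro allI impI)
          fix i assume "i < Suc m"
          then consider "i < m" | "i = m" by linarith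
          then show "\<chi> (lap L i) = \<chi> (lap L 0)"
          proof cases
            case 1 then show ?thesis using Lp(3) by blast
          next
            case 2 then show ?thesis using Lp(2) L(2) by simp
          qed
        qed
        then show ?thesis using Lp(1) by blast
      next
        case False
        have sub: "insert (\<chi> f) (set (map (\<lambda>L. \<chi> (lap L 0)) Ls)) \<subseteq> \<chi> ` W (Suc m) N"
          using foc(2,3) lap_W by auto
        have "card (insert (\<chi> f) (set (map (\<lambda>L. \<chi> (lap L 0)) Ls))) = Suc k"
        proof -
          have "card (set (map (\<lambda>L. \<chi> (lap L 0)) Ls)) = k"
            using distinct_card[OF foc(4)] foc(1) by simp
          moreover have "\<chi> f \<notin> set (map (\<lambda>L. \<chi> (lap L 0)) Ls)" using False by auto
          ultimately show ?thesis by simp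
        qed
        then have "Suc k \<le> card (\<chi> ` W (Suc m) N)"
          using card_mono[OF finite_imageI[OF finite_W] sub] by simp
        then show ?thesis using card by simp
      qed
    qed
  qed
qed

theorem HJ: "m \<ge> 1 \<Longrightarrow> \<exists>N. HJP m k N"
proof (induct m arbitrary: k rule: nat_induct_at_least)
  case base then show ?case using HJ_base by blast
next
  case (Suc m)
  show ?case by (rule HJ_step) (use Suc in auto)
qed

record 'v pst = vs :: "'v set"  pj :: "'v \<Rightarrow> nat \<times> nat"  ed :: "'v \<Rightarrow> 'v \<Rightarrow> bool"

definition wfp :: "nat \<Rightarrow> 'v pst \<Rightarrow> bool" where
 "wfp n P \<longleftrightarrow> finite (vs P) \<and> (\<forall>x\<in>vs P. fst (pj P x) < n) \<and>
   (\<forall>x\<in>vs P. \<forall>y\<in>vs P. fst (pj P x) = fst (pj P y) \<longrightarrow> \<not> ed P x y) \<and>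
   (\<forall>x\<in>vs P. \<forall>y\<in>vs P. fst (pj P x) \<noteq> fst (pj P y) \<longrightarrow> ed P x y \<noteq> ed P y x)"

definition Emb :: "'u pst \<Rightarrow> 'v pst \<Rightarrow> ('u \<Rightarrow> 'v) set" where
 "Emb X Y = {\<Phi>. inj_on \<Phi> (vs X) \<and> \<Phi> ` vs X \<subseteq> vs Y \<and> (\<forall>x\<in>vs X. pj Y (\<Phi> x) = pj X x) \<and>
     (\<forall>x\<in>vs X. \<forall>y\<in>vs X. ed Y (\<Phi> x) (\<Phi> y) = ed X x y)}"

definition Cp :: "'v pst \<Rightarrow> (nat\<times>nat) set \<Rightarrow> ((nat\<times>nat) \<Rightarrow> (nat\<times>nat) \<Rightarrow> bool) \<Rightarrow> ((nat\<times>nat) \<Rightarrow> 'v) set" where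
 "Cp X T eT = {\<psi>. (\<forall>d\<in>T. \<psi> d \<in> vs X \<and> pj X (\<psi> d) = d) \<and> (\<forall>d\<in>T. \<forall>d'\<in>T. ed X (\<psi> d) (\<psi> d') = eT d d')}"

definition bnd :: "nat \<Rightarrow> ('v set \<Rightarrow> nat) \<Rightarrow> 'v pst \<Rightarrow> (nat\<times>nat) set \<Rightarrow> ((nat\<times>nat) \<Rightarrow> (nat\<times>nat) \<Rightarrow> bool) \<Rightarrow> bool" where
 "bnd k \<chi> X T eT \<longleftrightarrow> (\<forall>\<psi>\<in>Cp X T eT. \<chi> (\<psi> ` T) < k)"

definition goodT :: "(nat\<times>nat) set \<Rightarrow> ((nat\<times>nat) \<Rightarrow> (nat\<times>nat) \<Rightarrow> bool) \<Rightarrow> bool" where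
 "goodT T eT \<longleftrightarrow> finite T \<and> (\<forall>d\<in>T. \<forall>d'\<in>T. fst d = fst d' \<longrightarrow> \<not> eT d d') \<and>
    (\<forall>d\<in>T. \<forall>d'\<in>T. fst d \<noteq> fst d' \<longrightarrow> eT d d' \<noteq> eT d' d)"

definition ramP :: "nat \<Rightarrow> 'u pst \<Rightarrow> 'v pst \<Rightarrow> (nat\<times>nat) set \<Rightarrow> ((nat\<times>nat) \<Rightarrow> (nat\<times>nat) \<Rightarrow> bool) \<Rightarrow> bool" where
 "ramP k X Q T eT \<longleftrightarrow> (\<forall>\<chi>. bnd k \<chi> Q T eT \<longrightarrow> (\<exists>\<phi>\<in>Emb X Q. \<exists>c. \<forall>\<psi>\<in>Cp X T eT. \<chi> (\<phi> ` \<psi> ` T) = c))"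

definition rl :: "'v::countable pst \<Rightarrow> nat pst" where
 "rl P = \<lparr>vs = to_nat ` vs P, pj = (\<lambda>x. pj P (from_nat x)), ed = (\<lambda>x y. ed P (from_nat x) (from_nat y))\<rparr>"

lemma rl_simps[simp]: "vs (rl P) = to_nat ` vs P" "pj (rl P) x = pj P (from_nat x)"
  "ed (rl P) x y = ed P (from_nat x) (from_nat y)"
  by (simp_all add: rl_def)

lemma wfp_rl: assumes "wfp n P" shows "wfp n (rl P)"
proof -
  have f: "finite (vs P)" and a: "\<forall>x\<in>vs P. fst (pj P x) < n"
    and b: "\<forall>x\<in>vs P. \<forall>y\<in>vs P. fst (pj P x) = fst (pj P y) \<longrightarrow> \<not> ed P x y"
    and c: "\<forall>x\<in>vs P. \<forall>y\<in>vs P. fst (pj P x) \<noteq> fst (pj P y) \<longrightarrow> ed P x y \<noteq> ed P y x"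
    using assms unfolding wfp_def by blast+
  show ?thesis unfolding wfp_def rl_simps
  proof (intro conjI ballI impI)
    show "finite (to_nat ` vs P)" using f by blast
  next
    fix x assume "x \<in> to_nat ` vs P" then show "fst (pj P (from_nat x)) < n" using a by auto
  next
    fix x y assume "x \<in> to_nat ` vs P" "y \<in> to_nat ` vs P" "fst (pj P (from_nat x)) = fst (pj P (from_nat y))"
    then show "\<not> ed P (from_nat x) (from_nat y)" using b by auto
  next
    fix x y assume "x \<in> to_nat ` vs P" "y \<in> to_nat ` vs P" "fst (pj P (from_nat x)) \<noteq> fst (pj P (from_nat y))"
    then show "ed P (from_nat x) (from_nat y) \<noteq> ed P (from_nat y) (from_nat x)" using c by auto
  qed
qed

lemma Emb_rl: "\<phi> \<in> Emb X P \<Longrightarrow> to_nat \<circ> \<phi> \<in> Emb X (rl P)"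
  unfolding Emb_def by (auto simp: inj_on_def)

lemma Cp_rl: "\<psi> \<in> Cp P T eT \<Longrightarrow> to_nat \<circ> \<psi> \<in> Cp (rl P) T eT"
  unfolding Cp_def by auto

lemma ramP_rl:
  fixes P :: "'v::countable pst"
  assumes "ramP k X P T eT" shows "ramP k X (rl P) T eT"
  unfolding ramP_def
proof (intro allI impI)
  fix \<chi> :: "nat set \<Rightarrow> nat" assume b: "bnd k \<chi> (rl P) T eT"
  define \<chi>' where "\<chi>' S = \<chi> (to_nat ` S)" for S :: "'v set"
  have "bnd k \<chi>' P T eT"
    unfolding bnd_def
  proof
    fix \<psi> assume "\<psi> \<in> Cp P T eT"
    then have "\<chi> ((to_nat \<circ> \<psi>) ` T) < k" using b Cp_rl unfolding bnd_def by blast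
    then show "\<chi>' (\<psi> ` T) < k" by (simp add: \<chi>'_def image_comp)
  qed
  then obtain \<phi> c where \<phi>: "\<phi> \<in> Emb X P" "\<forall>\<psi>\<in>Cp X T eT. \<chi>' (\<phi> ` \<psi> ` T) = c"
    using assms unfolding ramP_def by blast
  show "\<exists>\<phi>\<in>Emb X (rl P). \<exists>c. \<forall>\<psi>\<in>Cp X T eT. \<chi> (\<phi> ` \<psi> ` T) = c"
  proof (intro bexI exI ballI)
    show "to_nat \<circ> \<phi> \<in> Emb X (rl P)" by (rule Emb_rl[OF \<phi>(1)])
    fix \<psi> assume "\<psi> \<in> Cp X T eT"
    then show "\<chi> ((to_nat \<circ> \<phi>) ` \<psi> ` T) = c" using \<phi>(2) by (simp add: \<chi>'_def image_comp)
  qed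
qed

lemma wfpD:
  assumes "wfp n P"
  shows "finite (vs P)" "x \<in> vs P \<Longrightarrow> fst (pj P x) < n"
    "x \<in> vs P \<Longrightarrow> y \<in> vs P \<Longrightarrow> fst (pj P x) = fst (pj P y) \<Longrightarrow> \<not> ed P x y"
    "x \<in> vs P \<Longrightarrow> y \<in> vs P \<Longrightarrow> fst (pj P x) \<noteq> fst (pj P y) \<Longrightarrow> ed P x y \<noteq> ed P y x"
  using assms unfolding wfp_def by blast+

lemma goodTD:
  assumes "goodT T eT"
  shows "finite T" "d \<in> T \<Longrightarrow> d' \<in> T \<Longrightarrow> fst d = fst d' \<Longrightarrow> \<not> eT d d'"
    "d \<in> T \<Longrightarrow> d' \<in> T \<Longrightarrow> fst d \<noteq> fst d' \<Longrightarrow> eT d d' \<noteq> eT d' d"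
  using assms unfolding goodT_def by blast+

lemma id_Emb: "id \<in> Emb X X"
  unfolding Emb_def by auto

lemma HJP_pos: assumes "HJP m k N" "k \<ge> 1" shows "N \<ge> 1"
proof -
  have "(\<lambda>_. 0::nat) ` W m N \<subseteq> {0}" by blast
  then have "card ((\<lambda>_. 0::nat) ` W m N) \<le> card {0::nat}" by (rule card_mono[rotated]) simp
  then have "card ((\<lambda>_. 0::nat) ` W m N) \<le> k" using assms(2) by simp
  then obtain L where "is_line m N L" using assms(1) unfolding HJP_def by blast
  then show ?thesis unfolding is_line_def by (cases L) auto
qed

lemma PL:
  fixes R :: "nat pst"
  assumes gT: "goodT T eT" and wR: "wfp n R" and RT: "\<forall>x\<in>vs R. pj R x \<in> T" and k: "k \<ge> 1"
  shows "\<exists>Q::nat pst. wfp n Q \<and> ramP k R Q T eT"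
proof -
  define Cpr where "Cpr = (\<lambda>\<psi>. restrict \<psi> T) ` Cp R T eT"
  have "Cpr \<subseteq> PiE T (\<lambda>_. vs R)" unfolding Cpr_def Cp_def by (auto simp: PiE_iff)
  then have finCpr: "finite Cpr"
    using finite_PiE[OF goodTD(1)[OF gT], of "\<lambda>_. vs R"] wfpD(1)[OF wR] finite_subset by blast
  show ?thesis
  proof (cases "Cpr = {}")
    case True
    then have "Cp R T eT = {}" unfolding Cpr_def by simp
    then have "ramP k R R T eT" unfolding ramP_def using id_Emb by blast
    then show ?thesis using wR by blast
  next
    case False
    obtain cl where cl: "set cl = Cpr" "distinct cl" using finite_distinct_list[OF finCpr] by blast
    define m where "m = length cl"
    have m1: "m \<ge> 1" using False cl(1) unfolding m_def by (cases cl) auto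
    obtain N where N: "HJP m k N" using HJ[OF m1] by blast
    have N1: "N \<ge> 1" by (rule HJP_pos[OF N k])
    have clp: "(cl!c) d \<in> vs R \<and> pj R ((cl!c) d) = d" if "c < m" "d \<in> T" for c d
    proof -
      have "cl!c \<in> Cpr" using that(1) cl(1) unfolding m_def by auto
      then obtain \<psi> where "\<psi> \<in> Cp R T eT" "cl!c = restrict \<psi> T" unfolding Cpr_def by blast
      then show ?thesis using that(2) unfolding Cp_def by auto
    qed
    have cle: "ed R ((cl!c) d) ((cl!c) d') = eT d d'" if "c < m" "d \<in> T" "d' \<in> T" for c d d'
    proof -
      have "cl!c \<in> Cpr" using that(1) cl(1) unfolding m_def by auto
      then obtain \<psi> where "\<psi> \<in> Cp R T eT" "cl!c = restrict \<psi> T" unfolding Cpr_def by blast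
      then show ?thesis using that(2,3) unfolding Cp_def by auto
    qed
    define vQ where "vQ = {xs. length xs = N \<and> (\<exists>d\<in>T. \<forall>i<N. xs!i \<in> vs R \<and> pj R (xs!i) = d)}"
    define Q where "Q = \<lparr>vs = vQ, pj = (\<lambda>xs. pj R (xs!0)),
      ed = (\<lambda>xs ys. eT (pj R (xs!0)) (pj R (ys!0)) \<noteq> (\<exists>t<N. ed R (xs!t) (ys!t) \<noteq> eT (pj R (xs!0)) (pj R (ys!0))))\<rparr>"
    have Qs: "vs Q = vQ" "pj Q xs = pj R (xs!0)"
      "ed Q xs ys = (eT (pj R (xs!0)) (pj R (ys!0)) \<noteq> (\<exists>t<N. ed R (xs!t) (ys!t) \<noteq> eT (pj R (xs!0)) (pj R (ys!0))))"
      for xs ys unfolding Q_def by simp_all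
    have vQD: "length xs = N \<and> pj R (xs!0) \<in> T \<and> (\<forall>i<N. xs!i \<in> vs R \<and> pj R (xs!i) = pj R (xs!0))"
      if "xs \<in> vQ" for xs
    proof -
      from that obtain d where d: "d \<in> T" "length xs = N" "\<forall>i<N. xs!i \<in> vs R \<and> pj R (xs!i) = d"
        unfolding vQ_def by blast
      then show ?thesis using N1 by auto
    qed
    have wQ: "wfp n Q"
      unfolding wfp_def Qs
    proof (intro conjI ballI impI)
      have "vQ \<subseteq> {xs. set xs \<subseteq> vs R \<and> length xs = N}"
      proof
        fix xs assume "xs \<in> vQ"
        then have "length xs = N \<and> pj R (xs!0) \<in> T \<and> (\<forall>i<N. xs!i \<in> vs R \<and> pj R (xs!i) = pj R (xs!0))" by (rule vQD)
        then have "length xs = N" "\<forall>i<N. xs!i \<in> vs R" by blast+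
        then show "xs \<in> {xs. set xs \<subseteq> vs R \<and> length xs = N}" by (auto simp: in_set_conv_nth)
      qed
      then show "finite vQ" by (rule finite_subset[OF _ finite_lists_length_eq[OF wfpD(1)[OF wR]]])
    next
      fix xs assume "xs \<in> vQ"
      then have "\<forall>i<N. xs!i \<in> vs R \<and> pj R (xs!i) = pj R (xs!0)" by (rule vQD[THEN conjunct2, THEN conjunct2])
      then have "xs!0 \<in> vs R" using N1 by simp
      then show "fst (pj R (xs!0)) < n" using wfpD(2)[OF wR] by blast
    next
      fix xs ys assume xs: "xs \<in> vQ" and ys: "ys \<in> vQ" and p: "fst (pj R (xs!0)) = fst (pj R (ys!0))"
      have e0: "\<not> eT (pj R (xs!0)) (pj R (ys!0))" using goodTD(2)[OF gT] vQD[OF xs] vQD[OF ys] p by blast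
      have "\<not> ed R (xs!t) (ys!t)" if "t < N" for t
      proof -
        have "xs!t \<in> vs R" "ys!t \<in> vs R" "pj R (xs!t) = pj R (xs!0)" "pj R (ys!t) = pj R (ys!0)"
          using vQD[OF xs] vQD[OF ys] that by blast+
        then show ?thesis using wfpD(3)[OF wR] p by metis
      qed
      then show "\<not> (eT (pj R (xs!0)) (pj R (ys!0)) \<noteq> (\<exists>t<N. ed R (xs!t) (ys!t) \<noteq> eT (pj R (xs!0)) (pj R (ys!0))))"
        using e0 by blast
    next
      fix xs ys assume xs: "xs \<in> vQ" and ys: "ys \<in> vQ" and p: "fst (pj R (xs!0)) \<noteq> fst (pj R (ys!0))"
      have e0: "eT (pj R (xs!0)) (pj R (ys!0)) \<noteq> eT (pj R (ys!0)) (pj R (xs!0))"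
        using goodTD(3)[OF gT] vQD[OF xs] vQD[OF ys] p by blast
      have "ed R (xs!t) (ys!t) \<noteq> ed R (ys!t) (xs!t)" if "t < N" for t
      proof -
        have "xs!t \<in> vs R" "ys!t \<in> vs R" "pj R (xs!t) = pj R (xs!0)" "pj R (ys!t) = pj R (ys!0)"
          using vQD[OF xs] vQD[OF ys] that by blast+
        then show ?thesis using wfpD(4)[OF wR] p by metis
      qed
      then have "(\<exists>t<N. ed R (xs!t) (ys!t) \<noteq> eT (pj R (xs!0)) (pj R (ys!0))) =
                 (\<exists>t<N. ed R (ys!t) (xs!t) \<noteq> eT (pj R (ys!0)) (pj R (xs!0)))"
        using e0 by blast
      then show "(eT (pj R (xs!0)) (pj R (ys!0)) \<noteq> (\<exists>t<N. ed R (xs!t) (ys!t) \<noteq> eT (pj R (xs!0)) (pj R (ys!0)))) \<noteq>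
        (eT (pj R (ys!0)) (pj R (xs!0)) \<noteq> (\<exists>t<N. ed R (ys!t) (xs!t) \<noteq> eT (pj R (ys!0)) (pj R (xs!0))))"
        using e0 by blast
    qed
    have rQ: "ramP k R Q T eT"
      unfolding ramP_def
    proof (intro allI impI)
      fix \<chi> :: "nat list set \<Rightarrow> nat" assume b: "bnd k \<chi> Q T eT"
      define \<Psi> where "\<Psi> w d = map (\<lambda>t. (cl!(w!t)) d) [0..<N]" for w d
      have PsiCp: "\<Psi> w \<in> Cp Q T eT" if w: "w \<in> W m N" for w
      proof -
        have wl: "length w = N" "\<And>t. t < N \<Longrightarrow> w!t < m" using w unfolding W_def by (auto simp: subset_iff)
        have pjd: "pj R (\<Psi> w d ! 0) = d" if "d \<in> T" for d
          using clp[OF wl(2) that, of 0] N1 by (simp add: \<Psi>_def)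
        show ?thesis unfolding Cp_def
        proof (intro CollectI conjI ballI)
          fix d assume d: "d \<in> T"
          show "\<Psi> w d \<in> vs Q" unfolding Qs vQ_def
            using clp[OF wl(2) d] d by (auto simp: \<Psi>_def)
          show "pj Q (\<Psi> w d) = d" unfolding Qs using pjd[OF d] .
        next
          fix d d' assume d: "d \<in> T" and d': "d' \<in> T"
          have "\<not> (\<exists>t<N. ed R (\<Psi> w d ! t) (\<Psi> w d' ! t) \<noteq> eT d d')"
            using cle[OF wl(2) d d'] by (simp add: \<Psi>_def)
          then show "ed Q (\<Psi> w d) (\<Psi> w d') = eT d d'" unfolding Qs pjd[OF d] pjd[OF d'] by blast
        qed
      qed
      define \<chi>H where "\<chi>H w = \<chi> (\<Psi> w ` T)" for w
      have "\<chi>H ` W m N \<subseteq> {..<k}" using b PsiCp unfolding bnd_def \<chi>H_def by auto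
      then have "card (\<chi>H ` W m N) \<le> k" using card_mono[of "{..<k}"] by fastforce
      then obtain L where L: "is_line m N L" "\<forall>i<m. \<chi>H (lap L i) = \<chi>H (lap L 0)"
        using N[unfolded HJP_def, THEN spec, THEN mp] by blast
      have Ll: "length L = N" using L(1) unfolding is_line_def by blast
      obtain t0 where t0: "t0 < N" "L!t0 = None" using L(1) unfolding is_line_def by (metis in_set_conv_nth)
      have Lc: "c < m" if "t < N" "L!t = Some c" for t c
        using L(1) that unfolding is_line_def by (metis Ll nth_mem)
      define \<phi> where "\<phi> z = map (\<lambda>t. case L!t of None \<Rightarrow> z | Some c \<Rightarrow> (cl!c) (pj R z)) [0..<N]" for z
      have phi_nth: "\<phi> z ! t = (case L!t of None \<Rightarrow> z | Some c \<Rightarrow> (cl!c) (pj R z))" if "t < N" for z t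
        using that by (simp add: \<phi>_def)
      have phi_pj: "pj R (\<phi> z ! t) = pj R z" if "z \<in> vs R" "t < N" for z t
        using that clp[OF Lc, of t _ "pj R z"] RT phi_nth[OF that(2)] by (cases "L!t") auto
      have phi_in: "\<phi> z ! t \<in> vs R" if "z \<in> vs R" "t < N" for z t
        using that clp[OF Lc, of t _ "pj R z"] RT phi_nth[OF that(2)] by (cases "L!t") auto
      have phiE: "\<phi> \<in> Emb R Q"
        unfolding Emb_def
      proof (intro CollectI conjI ballI subsetI)
        show "inj_on \<phi> (vs R)"
        proof
          fix z z' assume "\<phi> z = \<phi> z'"
          then have "\<phi> z ! t0 = \<phi> z' ! t0" by simp
          then show "z = z'" using phi_nth[OF t0(1)] t0(2) by simp
        qed
      next
        fix y assume "y \<in> \<phi> ` vs R"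
        then obtain z where z: "z \<in> vs R" "y = \<phi> z" by blast
        show "y \<in> vs Q" unfolding Qs vQ_def
          using z phi_pj[OF z(1)] phi_in[OF z(1)] RT by (auto simp: \<phi>_def)
      next
        fix z assume z: "z \<in> vs R"
        show "pj Q (\<phi> z) = pj R z" unfolding Qs using phi_pj[OF z] N1 by simp
      next
        fix z z' assume z: "z \<in> vs R" and z': "z' \<in> vs R"
        have pz: "pj R (\<phi> z ! 0) = pj R z" "pj R (\<phi> z' ! 0) = pj R z'"
          using phi_pj[OF z] phi_pj[OF z'] N1 by auto
        have "(\<exists>t<N. ed R (\<phi> z ! t) (\<phi> z' ! t) \<noteq> eT (pj R z) (pj R z')) = (ed R z z' \<noteq> eT (pj R z) (pj R z'))"
        proof
          assume "\<exists>t<N. ed R (\<phi> z ! t) (\<phi> z' ! t) \<noteq> eT (pj R z) (pj R z')"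
          then obtain t where t: "t < N" "ed R (\<phi> z ! t) (\<phi> z' ! t) \<noteq> eT (pj R z) (pj R z')" by blast
          show "ed R z z' \<noteq> eT (pj R z) (pj R z')"
          proof (cases "L!t")
            case None then show ?thesis using t phi_nth[OF t(1)] by simp
          next
            case (Some c)
            then show ?thesis using t phi_nth[OF t(1)] cle[OF Lc[OF t(1) Some]] RT z z' by simp
          qed
        next
          assume "ed R z z' \<noteq> eT (pj R z) (pj R z')"
          then show "\<exists>t<N. ed R (\<phi> z ! t) (\<phi> z' ! t) \<noteq> eT (pj R z) (pj R z')"
            using t0 phi_nth[OF t0(1)] by (intro exI[of _ t0]) simp
        qed
        then show "ed Q (\<phi> z) (\<phi> z') = ed R z z'" unfolding Qs pz by blast
      qed
      show "\<exists>\<phi>\<in>Emb R Q. \<exists>c. \<forall>\<psi>\<in>Cp R T eT. \<chi> (\<phi> ` \<psi> ` T) = c"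
      proof (intro bexI[OF _ phiE] exI[of _ "\<chi>H (lap L 0)"] ballI)
        fix \<psi> assume psi: "\<psi> \<in> Cp R T eT"
        then have "restrict \<psi> T \<in> set cl" using cl(1) unfolding Cpr_def by blast
        then obtain j where j: "j < m" "cl!j = restrict \<psi> T" unfolding m_def by (metis in_set_conv_nth)
        have psid: "\<psi> d \<in> vs R \<and> pj R (\<psi> d) = d" if "d \<in> T" for d using psi that unfolding Cp_def by blast
        have "\<phi> (\<psi> d) = \<Psi> (lap L j) d" if d: "d \<in> T" for d
        proof (rule nth_equalityI)
          show "length (\<phi> (\<psi> d)) = length (\<Psi> (lap L j) d)" by (simp add: \<phi>_def \<Psi>_def)
        next
          fix t assume "t < length (\<phi> (\<psi> d))"
          then have t: "t < N" by (simp add: \<phi>_def)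
          have "lap L j ! t = (case L!t of None \<Rightarrow> j | Some c \<Rightarrow> c)" using t Ll by (simp add: lap_def split: option.split)
          then show "\<phi> (\<psi> d) ! t = \<Psi> (lap L j) d ! t"
            using phi_nth[OF t] psid[OF d] j(2) d t by (cases "L!t") (simp_all add: \<Psi>_def)
        qed
        then have "\<phi> ` \<psi> ` T = \<Psi> (lap L j) ` T" by (auto simp: image_image intro: image_cong)
        then have "\<chi> (\<phi> ` \<psi> ` T) = \<chi>H (lap L j)" by (simp add: \<chi>H_def)
        moreover have "\<chi>H (lap L j) = \<chi>H (lap L 0)" using L(2) j(1) by blast
        ultimately show "\<chi> (\<phi> ` \<psi> ` T) = \<chi>H (lap L 0)" by (rule trans)
      qed
    qed
    show ?thesis using wfp_rl[OF wQ] ramP_rl[OF rQ] by blast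
  qed
qed

definition dec :: "nat list \<Rightarrow> nat list \<Rightarrow> nat \<Rightarrow> nat" where
  "dec vl cs y = the (map_of (zip vl cs) y)"

lemma dec_map: "y \<in> set vl \<Longrightarrow> dec vl (map f vl) y = f y"
  by (simp add: dec_def map_of_zip_map)

fun apj :: "nat pst \<Rightarrow> nat pst \<Rightarrow> (nat + nat list \<times> nat) \<Rightarrow> nat \<times> nat" where
  "apj P Q (Inl q) = pj Q q"
| "apj P Q (Inr (cs, x)) = pj P x"

fun aed :: "nat pst \<Rightarrow> nat pst \<Rightarrow> nat list \<Rightarrow> nat set \<Rightarrow> (nat + nat list \<times> nat) \<Rightarrow> (nat + nat list \<times> nat) \<Rightarrow> bool" where
  "aed P Q vl VR (Inl q) (Inl q') = ed Q q q'"
| "aed P Q vl VR (Inl q) (Inr (cs, x)) =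
     (if \<exists>y\<in>VR. dec vl cs y = q then (\<exists>y\<in>VR. dec vl cs y = q \<and> ed P y x) else fst (pj Q q) < fst (pj P x))"
| "aed P Q vl VR (Inr (cs, x)) (Inl q) =
     (if \<exists>y\<in>VR. dec vl cs y = q then (\<exists>y\<in>VR. dec vl cs y = q \<and> ed P x y) else fst (pj P x) < fst (pj Q q))"
| "aed P Q vl VR (Inr (cs, x)) (Inr (cs', x')) = (if cs = cs' then ed P x x' else fst (pj P x) < fst (pj P x'))"

lemma Emb_comp: "\<Phi>1 \<in> Emb X Y \<Longrightarrow> \<Phi>2 \<in> Emb Y Z \<Longrightarrow> \<Phi>2 \<circ> \<Phi>1 \<in> Emb X Z"
  unfolding Emb_def by (auto simp: inj_on_def image_subset_iff)

lemma Emb_Cp: "\<Phi> \<in> Emb X Y \<Longrightarrow> \<psi> \<in> Cp X T eT \<Longrightarrow> \<Phi> \<circ> \<psi> \<in> Cp Y T eT"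
  unfolding Emb_def Cp_def by (auto simp: image_subset_iff)

lemma OS:
  fixes P :: "nat pst"
  assumes gT: "goodT T eT" and wP: "wfp n P" and k: "k \<ge> 1"
  shows "\<exists>P'::nat pst. wfp n P' \<and> ramP k P P' T eT"
proof -
  define R where "R = \<lparr>vs = {x\<in>vs P. pj P x \<in> T}, pj = pj P, ed = ed P\<rparr>"
  have Rs: "vs R = {x\<in>vs P. pj P x \<in> T}" "pj R = pj P" "ed R = ed P" unfolding R_def by simp_all
  have wR: "wfp n R" unfolding wfp_def Rs
  proof (intro conjI ballI impI)
    show "finite {x \<in> vs P. pj P x \<in> T}" using wfpD(1)[OF wP] by simp
  qed (use wfpD[OF wP] in blast)+
  have RT: "\<forall>x\<in>vs R. pj R x \<in> T" unfolding Rs by blast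
  obtain Q :: "nat pst" where wQ: "wfp n Q" and rQ: "ramP k R Q T eT" using PL[OF gT wR RT k] by blast
  define VR where "VR = vs R"
  have finVR: "finite VR" unfolding VR_def using wfpD(1)[OF wR] .
  define vl where "vl = sorted_list_of_set VR"
  have vl: "set vl = VR" unfolding vl_def using finVR by simp
  define EC where "EC = {map \<phi> vl | \<phi>. \<phi> \<in> Emb R Q}"
  have ECD: "\<exists>\<phi>\<in>Emb R Q. cs = map \<phi> vl" if "cs \<in> EC" for cs using that unfolding EC_def by blast
  have dec_eq: "dec vl (map \<phi> vl) y = \<phi> y" if "y \<in> VR" for \<phi> y using dec_map[of y vl \<phi>] vl that by simp
  have EmbD: "inj_on \<phi> VR" "\<And>x. x \<in> VR \<Longrightarrow> \<phi> x \<in> vs Q" "\<And>x. x \<in> VR \<Longrightarrow> pj Q (\<phi> x) = pj P x"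
     "\<And>x y. x \<in> VR \<Longrightarrow> y \<in> VR \<Longrightarrow> ed Q (\<phi> x) (\<phi> y) = ed P x y" if "\<phi> \<in> Emb R Q" for \<phi>
    using that unfolding Emb_def VR_def Rs by auto
  define V' where "V' = Inl ` vs Q \<union> {Inr (cs, x) | cs x. cs \<in> EC \<and> x \<in> vs P \<and> pj P x \<notin> T}"
  define P' where "P' = \<lparr>vs = V', pj = apj P Q, ed = aed P Q vl VR\<rparr>"
  have P's: "vs P' = V'" "pj P' = apj P Q" "ed P' = aed P Q vl VR" unfolding P'_def by simp_all
  have VRP: "x \<in> VR \<Longrightarrow> x \<in> vs P \<and> pj P x \<in> T" for x unfolding VR_def Rs by blast
  have uniq: "(\<exists>y\<in>VR. dec vl cs y = q \<and> Pr y) \<longleftrightarrow> Pr y0"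
    if a: "cs \<in> EC" "y0 \<in> VR" "dec vl cs y0 = q" for cs q y0 Pr
  proof -
    obtain \<phi> where \<phi>: "\<phi> \<in> Emb R Q" "cs = map \<phi> vl" using ECD[OF a(1)] by blast
    have "y = y0" if "y \<in> VR" "dec vl cs y = q" for y
      using that \<open>y0 \<in> VR\<close> \<open>dec vl cs y0 = q\<close> dec_eq \<phi> EmbD(1)[OF \<phi>(1)] by (metis inj_on_eq_iff)
    then show ?thesis using a(2,3) by blast
  qed
  have pre_pj: "pj Q q = pj P y0" if a: "cs \<in> EC" "y0 \<in> VR" "dec vl cs y0 = q" for cs q y0
  proof -
    obtain \<phi> where \<phi>: "\<phi> \<in> Emb R Q" "cs = map \<phi> vl" using ECD[OF a(1)] by blast
    then show ?thesis using a dec_eq EmbD(3)[OF \<phi>(1)] by metis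
  qed
  have V'D: "u \<in> V' \<Longrightarrow> (\<exists>q. u = Inl q \<and> q \<in> vs Q) \<or> (\<exists>cs x. u = Inr (cs, x) \<and> cs \<in> EC \<and> x \<in> vs P \<and> pj P x \<notin> T)" for u
    unfolding V'_def by blast
  have wP': "wfp n P'"
    unfolding wfp_def P's
  proof (intro conjI ballI impI)
    have "EC \<subseteq> {cs. set cs \<subseteq> vs Q \<and> length cs = length vl}"
      unfolding EC_def using EmbD(2) vl by auto
    then have "finite EC" by (rule finite_subset[OF _ finite_lists_length_eq[OF wfpD(1)[OF wQ]]])
    then have "finite (EC \<times> vs P)" using wfpD(1)[OF wP] by blast
    then have "finite (Inr ` (EC \<times> vs P) :: (nat + nat list \<times> nat) set)" by blast
    moreover have "({Inr (cs, x) | cs x. cs \<in> EC \<and> x \<in> vs P \<and> pj P x \<notin> T} :: (nat + nat list \<times> nat) set) \<subseteq> Inr ` (EC \<times> vs P)"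
      by blast
    ultimately have "finite ({Inr (cs, x) | cs x. cs \<in> EC \<and> x \<in> vs P \<and> pj P x \<notin> T} :: (nat + nat list \<times> nat) set)" by (rule finite_subset[rotated])
    then show "finite V'" unfolding V'_def using wfpD(1)[OF wQ] by blast
  next
    fix u assume "u \<in> V'"
    then show "fst (apj P Q u) < n" using V'D wfpD(2)[OF wQ] wfpD(2)[OF wP] by force
  next
    fix u v assume u: "u \<in> V'" and v: "v \<in> V'" and p: "fst (apj P Q u) = fst (apj P Q v)"
    from V'D[OF u] V'D[OF v] show "\<not> aed P Q vl VR u v"
    proof (elim disjE exE conjE)
      fix q q' assume "u = Inl q" "q \<in> vs Q" "v = Inl q'" "q' \<in> vs Q"
      then show ?thesis using p wfpD(3)[OF wQ] by simp
    next
      fix q cs x assume a: "u = Inl q" "q \<in> vs Q" "v = Inr (cs, x)" "cs \<in> EC" "x \<in> vs P" "pj P x \<notin> T"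
      show ?thesis
      proof (cases "\<exists>y\<in>VR. dec vl cs y = q")
        case True
        then obtain y0 where y0: "y0 \<in> VR" "dec vl cs y0 = q" by blast
        have "fst (pj P y0) = fst (pj P x)" using p a pre_pj[OF a(4) y0] by simp
        then have "\<not> ed P y0 x" using wfpD(3)[OF wP _ a(5)] VRP[OF y0(1)] by blast
        then show ?thesis using a uniq[OF a(4) y0, of "\<lambda>y. ed P y x"] True by simp
      next
        case False then show ?thesis using a p by simp
      qed
    next
      fix q cs x assume a: "u = Inr (cs, x)" "cs \<in> EC" "x \<in> vs P" "pj P x \<notin> T" "v = Inl q" "q \<in> vs Q"
      show ?thesis
      proof (cases "\<exists>y\<in>VR. dec vl cs y = q")
        case True
        then obtain y0 where y0: "y0 \<in> VR" "dec vl cs y0 = q" by blast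
        have "fst (pj P x) = fst (pj P y0)" using p a pre_pj[OF a(2) y0] by simp
        then have "\<not> ed P x y0" using wfpD(3)[OF wP a(3)] VRP[OF y0(1)] by blast
        then show ?thesis using a uniq[OF a(2) y0, of "\<lambda>y. ed P x y"] True by simp
      next
        case False then show ?thesis using a p by simp
      qed
    next
      fix cs x cs' x' assume a: "u = Inr (cs, x)" "cs \<in> EC" "x \<in> vs P" "pj P x \<notin> T"
        "v = Inr (cs', x')" "cs' \<in> EC" "x' \<in> vs P" "pj P x' \<notin> T"
      have "fst (pj P x) = fst (pj P x')" using p a by simp
      moreover have "\<not> ed P x x'" using wfpD(3)[OF wP a(3) a(7)] calculation by blast
      ultimately show ?thesis using a by simp
    qed
  next
    fix u v assume u: "u \<in> V'" and v: "v \<in> V'" and p: "fst (apj P Q u) \<noteq> fst (apj P Q v)"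
    from V'D[OF u] V'D[OF v] show "aed P Q vl VR u v \<noteq> aed P Q vl VR v u"
    proof (elim disjE exE conjE)
      fix q q' assume a: "u = Inl q" "q \<in> vs Q" "v = Inl q'" "q' \<in> vs Q"
      have "fst (pj Q q) \<noteq> fst (pj Q q')" using p a by simp
      then have "ed Q q q' \<noteq> ed Q q' q" using wfpD(4)[OF wQ a(2) a(4)] by blast
      then show ?thesis using a by simp
    next
      fix q cs x assume a: "u = Inl q" "q \<in> vs Q" "v = Inr (cs, x)" "cs \<in> EC" "x \<in> vs P" "pj P x \<notin> T"
      show ?thesis
      proof (cases "\<exists>y\<in>VR. dec vl cs y = q")
        case True
        then obtain y0 where y0: "y0 \<in> VR" "dec vl cs y0 = q" by blast
        have "fst (pj P y0) \<noteq> fst (pj P x)" using p a pre_pj[OF a(4) y0] by simp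
        then have "ed P y0 x \<noteq> ed P x y0" using wfpD(4)[OF wP _ a(5)] VRP[OF y0(1)] by blast
        then show ?thesis using a uniq[OF a(4) y0, of "\<lambda>y. ed P y x"] uniq[OF a(4) y0, of "\<lambda>y. ed P x y"] True by simp
      next
        case False then show ?thesis using a p by auto
      qed
    next
      fix q cs x assume a: "u = Inr (cs, x)" "cs \<in> EC" "x \<in> vs P" "pj P x \<notin> T" "v = Inl q" "q \<in> vs Q"
      show ?thesis
      proof (cases "\<exists>y\<in>VR. dec vl cs y = q")
        case True
        then obtain y0 where y0: "y0 \<in> VR" "dec vl cs y0 = q" by blast
        have "fst (pj P y0) \<noteq> fst (pj P x)" using p a pre_pj[OF a(2) y0] by simp
        then have "ed P y0 x \<noteq> ed P x y0" using wfpD(4)[OF wP _ a(3)] VRP[OF y0(1)] by blast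
        then show ?thesis using a uniq[OF a(2) y0, of "\<lambda>y. ed P y x"] uniq[OF a(2) y0, of "\<lambda>y. ed P x y"] True by simp
      next
        case False then show ?thesis using a p by auto
      qed
    next
      fix cs x cs' x' assume a: "u = Inr (cs, x)" "cs \<in> EC" "x \<in> vs P" "pj P x \<notin> T"
        "v = Inr (cs', x')" "cs' \<in> EC" "x' \<in> vs P" "pj P x' \<notin> T"
      have "fst (pj P x) \<noteq> fst (pj P x')" using p a by simp
      then have "ed P x x' \<noteq> ed P x' x" using wfpD(4)[OF wP a(3) a(7)] by blast
      then show ?thesis using a \<open>fst (pj P x) \<noteq> fst (pj P x')\<close> by auto
    qed
  qed
  have rP': "ramP k P P' T eT"
    unfolding ramP_def
  proof (intro allI impI)
    fix \<chi> :: "(nat + nat list \<times> nat) set \<Rightarrow> nat" assume b: "bnd k \<chi> P' T eT"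
    define \<chi>Q where "\<chi>Q S = \<chi> (Inl ` S)" for S
    have "bnd k \<chi>Q Q T eT"
      unfolding bnd_def
    proof
      fix \<psi> assume psi: "\<psi> \<in> Cp Q T eT"
      have "Inl \<circ> \<psi> \<in> Cp P' T eT" using psi unfolding Cp_def P's V'_def by auto
      then have "\<chi> ((Inl \<circ> \<psi>) ` T) < k" using b unfolding bnd_def by blast
      then show "\<chi>Q (\<psi> ` T) < k" by (simp add: \<chi>Q_def image_comp)
    qed
    then obtain \<phi> c where \<phi>: "\<phi> \<in> Emb R Q" "\<forall>\<psi>\<in>Cp R T eT. \<chi>Q (\<phi> ` \<psi> ` T) = c"
      using rQ unfolding ramP_def by blast
    define \<Phi> where "\<Phi> x = (if pj P x \<in> T then Inl (\<phi> x) else Inr (map \<phi> vl, x))" for x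
    have cs: "map \<phi> vl \<in> EC" unfolding EC_def using \<phi>(1) by blast
    have xVR: "x \<in> vs P \<Longrightarrow> pj P x \<in> T \<Longrightarrow> x \<in> VR" for x unfolding VR_def Rs by blast
    have \<Phi>E: "\<Phi> \<in> Emb P P'"
      unfolding Emb_def
    proof (intro CollectI conjI ballI subsetI)
      show "inj_on \<Phi> (vs P)"
      proof
        fix x y assume x: "x \<in> vs P" and y: "y \<in> vs P" and e: "\<Phi> x = \<Phi> y"
        show "x = y"
        proof (cases "pj P x \<in> T"; cases "pj P y \<in> T")
          assume "pj P x \<in> T" "pj P y \<in> T"
          then show ?thesis using e x y xVR EmbD(1)[OF \<phi>(1)] by (simp add: \<Phi>_def inj_on_eq_iff)
        qed (use e in \<open>auto simp: \<Phi>_def\<close>)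
      qed
    next
      fix u assume "u \<in> \<Phi> ` vs P"
      then obtain x where x: "x \<in> vs P" "u = \<Phi> x" by blast
      show "u \<in> vs P'" unfolding P's V'_def using x cs EmbD(2)[OF \<phi>(1) xVR] by (auto simp: \<Phi>_def)
    next
      fix x assume x: "x \<in> vs P"
      show "pj P' (\<Phi> x) = pj P x" unfolding P's using x EmbD(3)[OF \<phi>(1) xVR] by (simp add: \<Phi>_def)
    next
      fix x y assume x: "x \<in> vs P" and y: "y \<in> vs P"
      show "ed P' (\<Phi> x) (\<Phi> y) = ed P x y" unfolding P's
      proof (cases "pj P x \<in> T"; cases "pj P y \<in> T")
        assume a: "pj P x \<in> T" "pj P y \<in> T"
        then show "aed P Q vl VR (\<Phi> x) (\<Phi> y) = ed P x y" using x y EmbD(4)[OF \<phi>(1) xVR xVR] by (simp add: \<Phi>_def)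
      next
        assume a: "pj P x \<in> T" "pj P y \<notin> T"
        have "dec vl (map \<phi> vl) x = \<phi> x" using dec_eq xVR[OF x a(1)] by blast
        then show "aed P Q vl VR (\<Phi> x) (\<Phi> y) = ed P x y"
          using a uniq[OF cs xVR[OF x a(1)], of "\<phi> x" "\<lambda>y'. ed P y' y"] xVR[OF x a(1)] by (auto simp: \<Phi>_def)
      next
        assume a: "pj P x \<notin> T" "pj P y \<in> T"
        have "dec vl (map \<phi> vl) y = \<phi> y" using dec_eq xVR[OF y a(2)] by blast
        then show "aed P Q vl VR (\<Phi> x) (\<Phi> y) = ed P x y"
          using a uniq[OF cs xVR[OF y a(2)], of "\<phi> y" "\<lambda>y'. ed P x y'"] xVR[OF y a(2)] by (auto simp: \<Phi>_def)
      next
        assume a: "pj P x \<notin> T" "pj P y \<notin> T"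
        then show "aed P Q vl VR (\<Phi> x) (\<Phi> y) = ed P x y" by (simp add: \<Phi>_def)
      qed
    qed
    show "\<exists>\<Phi>\<in>Emb P P'. \<exists>c. \<forall>\<psi>\<in>Cp P T eT. \<chi> (\<Phi> ` \<psi> ` T) = c"
    proof (intro bexI[OF _ \<Phi>E] exI[of _ c] ballI)
      fix \<psi> assume psi: "\<psi> \<in> Cp P T eT"
      have psiR: "\<psi> \<in> Cp R T eT" using psi unfolding Cp_def Rs by auto
      have "\<Phi> ` \<psi> ` T = Inl ` \<phi> ` \<psi> ` T"
        using psi unfolding Cp_def by (auto simp: \<Phi>_def image_iff)
      then show "\<chi> (\<Phi> ` \<psi> ` T) = c" using \<phi>(2) psiR by (simp add: \<chi>Q_def)
    qed
  qed
  show ?thesis using wfp_rl[OF wP'] ramP_rl[OF rP'] by blast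
qed

lemma IT:
  assumes gT: "\<forall>(T, eT)\<in>set TS. goodT T eT" and k: "k \<ge> 1"
  shows "\<forall>P::nat pst. wfp n P \<longrightarrow> (\<exists>P'::nat pst. wfp n P' \<and> (\<forall>\<chi>. (\<forall>(T, eT)\<in>set TS. bnd k \<chi> P' T eT) \<longrightarrow>
    (\<exists>\<Phi>\<in>Emb P P'. \<forall>(T, eT)\<in>set TS. \<exists>c. \<forall>\<psi>\<in>Cp P T eT. \<chi> (\<Phi> ` \<psi> ` T) = c)))"
  using gT
proof (induct TS)
  case Nil
  show ?case
  proof (intro allI impI)
    fix P :: "nat pst" assume "wfp n P"
    then show "\<exists>P'::nat pst. wfp n P' \<and> (\<forall>\<chi>. (\<forall>(T, eT)\<in>set []. bnd k \<chi> P' T eT) \<longrightarrow>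
      (\<exists>\<Phi>\<in>Emb P P'. \<forall>(T, eT)\<in>set []. \<exists>c. \<forall>\<psi>\<in>Cp P T eT. \<chi> (\<Phi> ` \<psi> ` T) = c))"
      using id_Emb[of P] by auto
  qed
next
  case (Cons TE TS)
  obtain T eT where TE: "TE = (T, eT)" by (cases TE)
  have g1: "goodT T eT" using Cons.prems TE by simp
  have g2: "\<forall>(T, eT)\<in>set TS. goodT T eT" using Cons.prems by simp
  show ?case
  proof (intro allI impI)
    fix P :: "nat pst" assume wP: "wfp n P"
    obtain P1 :: "nat pst" where wP1: "wfp n P1" and r1: "ramP k P P1 T eT" using OS[OF g1 wP k] by blast
    obtain P' :: "nat pst" where wP': "wfp n P'" and IH: "\<forall>\<chi>. (\<forall>(T, eT)\<in>set TS. bnd k \<chi> P' T eT) \<longrightarrow>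
      (\<exists>\<Phi>\<in>Emb P1 P'. \<forall>(T, eT)\<in>set TS. \<exists>c. \<forall>\<psi>\<in>Cp P1 T eT. \<chi> (\<Phi> ` \<psi> ` T) = c)"
      using Cons.hyps[OF g2] wP1 by blast
    show "\<exists>P'::nat pst. wfp n P' \<and> (\<forall>\<chi>. (\<forall>(T, eT)\<in>set (TE # TS). bnd k \<chi> P' T eT) \<longrightarrow>
      (\<exists>\<Phi>\<in>Emb P P'. \<forall>(T, eT)\<in>set (TE # TS). \<exists>c. \<forall>\<psi>\<in>Cp P T eT. \<chi> (\<Phi> ` \<psi> ` T) = c))"
    proof (intro exI[of _ P'] conjI wP' allI impI)
      fix \<chi> :: "nat set \<Rightarrow> nat" assume b: "\<forall>(T, eT)\<in>set (TE # TS). bnd k \<chi> P' T eT"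
      then have bT: "bnd k \<chi> P' T eT" and bTS: "\<forall>(T, eT)\<in>set TS. bnd k \<chi> P' T eT" using TE by auto
      obtain \<Phi>2 where \<Phi>2: "\<Phi>2 \<in> Emb P1 P'" "\<forall>(T, eT)\<in>set TS. \<exists>c. \<forall>\<psi>\<in>Cp P1 T eT. \<chi> (\<Phi>2 ` \<psi> ` T) = c"
        using IH bTS by blast
      define \<chi>1 where "\<chi>1 S = \<chi> (\<Phi>2 ` S)" for S
      have "bnd k \<chi>1 P1 T eT"
        unfolding bnd_def
      proof
        fix \<psi> assume "\<psi> \<in> Cp P1 T eT"
        then have "\<Phi>2 \<circ> \<psi> \<in> Cp P' T eT" by (rule Emb_Cp[OF \<Phi>2(1)])
        then have "\<chi> ((\<Phi>2 \<circ> \<psi>) ` T) < k" using bT unfolding bnd_def by blast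
        then show "\<chi>1 (\<psi> ` T) < k" by (simp add: \<chi>1_def image_comp)
      qed
      then obtain \<Phi>1 c where \<Phi>1: "\<Phi>1 \<in> Emb P P1" "\<forall>\<psi>\<in>Cp P T eT. \<chi>1 (\<Phi>1 ` \<psi> ` T) = c"
        using r1 unfolding ramP_def by blast
      show "\<exists>\<Phi>\<in>Emb P P'. \<forall>(T, eT)\<in>set (TE # TS). \<exists>c. \<forall>\<psi>\<in>Cp P T eT. \<chi> (\<Phi> ` \<psi> ` T) = c"
      proof (intro bexI[OF _ Emb_comp[OF \<Phi>1(1) \<Phi>2(1)]] ballI)
        fix TE' assume "TE' \<in> set (TE # TS)"
        then consider "TE' = (T, eT)" | "TE' \<in> set TS" using TE by auto
        then show "case TE' of (T, eT) \<Rightarrow> \<exists>c. \<forall>\<psi>\<in>Cp P T eT. \<chi> ((\<Phi>2 \<circ> \<Phi>1) ` \<psi> ` T) = c"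
        proof cases
          case 1
          then show ?thesis using \<Phi>1(2) by (simp add: \<chi>1_def image_comp)
        next
          case 2
          obtain T' eT' where TE': "TE' = (T', eT')" by (cases TE')
          then obtain c' where c': "\<forall>\<psi>\<in>Cp P1 T' eT'. \<chi> (\<Phi>2 ` \<psi> ` T') = c'" using \<Phi>2(2) 2 by fastforce
          have "\<chi> ((\<Phi>2 \<circ> \<Phi>1) ` \<psi> ` T') = c'" if "\<psi> \<in> Cp P T' eT'" for \<psi>
          proof -
            have "\<Phi>1 \<circ> \<psi> \<in> Cp P1 T' eT'" by (rule Emb_Cp[OF \<Phi>1(1) that])
            then have "\<chi> (\<Phi>2 ` (\<Phi>1 \<circ> \<psi>) ` T') = c'" using c' by blast
            then show ?thesis by (simp add: image_comp)
          qed
          then show ?thesis using TE' by auto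
        qed
      qed
    qed
  qed
qed

definition lx :: "nat pst \<Rightarrow> nat \<Rightarrow> nat \<Rightarrow> bool" where
 "lx P x y \<longleftrightarrow> fst (pj P x) < fst (pj P y) \<or> (fst (pj P x) = fst (pj P y) \<and>
     (snd (pj P x) < snd (pj P y) \<or> (snd (pj P x) = snd (pj P y) \<and> x < y)))"

lemma LX:
  fixes a j j' :: nat
  assumes p: "\<forall>j<a. pj P (y j) = (\<pi> j, \<sigma> j)"
    and m: "\<forall>j<a. \<forall>j'<a. j < j' \<longrightarrow> \<pi> j \<le> \<pi> j' \<and> \<sigma> j < \<sigma> j'"
    and j: "j < a" "j' < a"
  shows "lx P (y j) (y j') \<longleftrightarrow> j < j'"
proof (cases "j < j'")
  case True
  then have "\<pi> j \<le> \<pi> j'" "\<sigma> j < \<sigma> j'" using m j by blast+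
  then show ?thesis using True p j unfolding lx_def by auto
next
  case False
  then consider "j = j'" | "j' < j" by (metis linorder_neqE_nat)
  then show ?thesis
  proof cases
    case 1 then show ?thesis unfolding lx_def by auto
  next
    case 2
    then have "\<pi> j' \<le> \<pi> j" "\<sigma> j' < \<sigma> j" using m j by blast+
    then show ?thesis using 2 p j unfolding lx_def by auto
  qed
qed

lemma rank_exists:
  assumes fin: "finite V" and irr: "\<forall>x\<in>V. \<not> R x x"
    and tr: "\<forall>x\<in>V. \<forall>y\<in>V. \<forall>z\<in>V. R x y \<longrightarrow> R y z \<longrightarrow> R x z"
    and tot: "\<forall>x\<in>V. \<forall>y\<in>V. x = y \<or> R x y \<or> R y x"
  shows "\<exists>r. bij_betw r V {..<card V} \<and> (\<forall>x\<in>V. \<forall>y\<in>V. R x y \<longleftrightarrow> r x < r y)"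
proof -
  define r where "r x = card {u\<in>V. R u x}" for x
  have lt: "r x < r y" if "x \<in> V" "y \<in> V" "R x y" for x y
  proof -
    have "{u\<in>V. R u x} \<subset> {u\<in>V. R u y}"
    proof
      show "{u\<in>V. R u x} \<subseteq> {u\<in>V. R u y}" using tr that by blast
      show "{u\<in>V. R u x} \<noteq> {u\<in>V. R u y}" using that irr by blast
    qed
    then show ?thesis unfolding r_def by (rule psubset_card_mono[rotated]) (use fin in auto)
  qed
  have bound: "r x < card V" if "x \<in> V" for x
  proof -
    have "{u\<in>V. R u x} \<subset> V" using that irr by blast
    then show ?thesis unfolding r_def using fin by (rule psubset_card_mono[rotated])
  qed
  have iff: "R x y \<longleftrightarrow> r x < r y" if "x \<in> V" "y \<in> V" for x y
  proof
    assume "r x < r y"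
    show "R x y"
    proof (rule ccontr)
      assume "\<not> R x y"
      then have "x = y \<or> R y x" using tot that by blast
      then show False using lt that \<open>r x < r y\<close> by fastforce
    qed
  qed (use lt that in blast)
  have inj: "inj_on r V"
  proof
    fix x y assume "x \<in> V" "y \<in> V" "r x = r y"
    then show "x = y" using tot iff by (metis less_irrefl)
  qed
  have sub: "r ` V \<subseteq> {..<card V}" using bound by auto
  have "card (r ` V) = card {..<card V}" using card_image[OF inj] by simp
  then have "r ` V = {..<card V}" using card_subset_eq[OF _ sub] by simp
  then have "bij_betw r V {..<card V}" using inj unfolding bij_betw_def by blast
  then show ?thesis using iff by blast
qed

lemma KstarD0: assumes "X \<in> Kstar n" shows "finite (univ X)"
  using assms unfolding Kstar_def mem_Collect_eq apply (elim conjE) apply assumption done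

lemma KstarD1: assumes "X \<in> Kstar n" shows "\<forall>x\<in>univ X. \<not> less X x x"
  using assms unfolding Kstar_def mem_Collect_eq apply (elim conjE) apply assumption done

lemma KstarD2: assumes "X \<in> Kstar n" shows "\<forall>x\<in>univ X. \<forall>y\<in>univ X. \<forall>z\<in>univ X. less X x y \<longrightarrow> less X y z \<longrightarrow> less X x z"
  using assms unfolding Kstar_def mem_Collect_eq apply (elim conjE) apply assumption done

lemma KstarD3: assumes "X \<in> Kstar n" shows "\<forall>x\<in>univ X. \<forall>y\<in>univ X. x = y \<or> less X x y \<or> less X y x"
  using assms unfolding Kstar_def mem_Collect_eq apply (elim conjE) apply assumption done

lemmas KstarD = KstarD0 KstarD1 KstarD2 KstarD3

lemma Kstar_pt:
  assumes X: "X \<in> Kstar n"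
  obtains pt where "\<forall>u\<in>univ X. pt u < n \<and> u \<in> pred X (pt u)"
    "\<forall>u\<in>univ X. \<forall>i<n. u \<in> pred X i \<longrightarrow> i = pt u"
    "\<forall>u\<in>univ X. \<forall>v\<in>univ X. pt u = pt v \<longrightarrow> \<not> edge X u v"
    "\<forall>u\<in>univ X. \<forall>v\<in>univ X. pt u \<noteq> pt v \<longrightarrow> edge X u v \<noteq> edge X v u"
    "\<forall>u\<in>univ X. \<forall>v\<in>univ X. less X u v \<longrightarrow> pt u \<le> pt v"
proof -
  have cm: "complete_multipartite X"
    using X unfolding Kstar_def mem_Collect_eq apply (elim conjE) apply assumption done
  have disj: "\<forall>i<n. \<forall>j<n. i \<noteq> j \<longrightarrow> pred X i \<inter> pred X j = {}"
    using X unfolding Kstar_def mem_Collect_eq apply (elim conjE) apply assumption done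
  have parts: "\<forall>x\<in>univ X. \<exists>i<n. part_of X x = pred X i"
    using X unfolding Kstar_def mem_Collect_eq apply (elim conjE) apply assumption done
  have ordp: "\<forall>i<n. \<forall>j<n. i < j \<longrightarrow> (\<forall>x\<in>pred X i. \<forall>y\<in>pred X j. less X x y)"
    using X unfolding Kstar_def mem_Collect_eq apply (elim conjE) apply assumption done
  have irr: "\<forall>x\<in>univ X. \<not> edge X x x" and asym: "\<forall>x\<in>univ X. \<forall>y\<in>univ X. edge X x y \<longrightarrow> \<not> edge X y x"
    using cm unfolding complete_multipartite_def by blast+
  note lin = KstarD[OF X]
  define pt where "pt u = (SOME i. i < n \<and> part_of X u = pred X i)" for u
  have pt1: "pt u < n \<and> part_of X u = pred X (pt u)" if "u \<in> univ X" for u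
    unfolding pt_def using someI_ex[OF parts[rule_format, OF that]] by blast
  have selfp: "u \<in> part_of X u" if "u \<in> univ X" for u using that unfolding part_of_def by blast
  have A: "\<forall>u\<in>univ X. pt u < n \<and> u \<in> pred X (pt u)" using pt1 selfp by metis
  have B: "\<forall>u\<in>univ X. \<forall>i<n. u \<in> pred X i \<longrightarrow> i = pt u"
  proof (intro ballI allI impI)
    fix u i assume u: "u \<in> univ X" and i: "i < n" "u \<in> pred X i"
    show "i = pt u"
    proof (rule ccontr)
      assume "i \<noteq> pt u"
      then have "pred X i \<inter> pred X (pt u) = {}" using disj i(1) A u by blast
      then show False using i(2) A u by blast
    qed
  qed
  have C: "\<forall>u\<in>univ X. \<forall>v\<in>univ X. pt u = pt v \<longrightarrow> \<not> edge X u v"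
  proof (intro ballI impI)
    fix u v assume u: "u \<in> univ X" and v: "v \<in> univ X" and e: "pt u = pt v"
    have "v \<in> part_of X u" using pt1[OF u] A v e by auto
    then have "u = v \<or> (\<not> edge X u v \<and> \<not> edge X v u)" unfolding part_of_def by blast
    then show "\<not> edge X u v" using irr u by blast
  qed
  have D: "\<forall>u\<in>univ X. \<forall>v\<in>univ X. pt u \<noteq> pt v \<longrightarrow> edge X u v \<noteq> edge X v u"
  proof (intro ballI impI)
    fix u v assume u: "u \<in> univ X" and v: "v \<in> univ X" and e: "pt u \<noteq> pt v"
    have "v \<notin> pred X (pt u)" using B v pt1[OF u] e by metis
    then have "v \<notin> part_of X u" using pt1[OF u] by simp
    then have "u \<noteq> v \<and> (edge X u v \<or> edge X v u)" using v unfolding part_of_def by blast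
    then show "edge X u v \<noteq> edge X v u" using asym u v by blast
  qed
  have E: "\<forall>u\<in>univ X. \<forall>v\<in>univ X. less X u v \<longrightarrow> pt u \<le> pt v"
  proof (intro ballI impI)
    fix u v assume u: "u \<in> univ X" and v: "v \<in> univ X" and l: "less X u v"
    show "pt u \<le> pt v"
    proof (rule ccontr)
      assume "\<not> pt u \<le> pt v"
      then have "less X v u" using ordp A u v by (meson not_le)
      then have "less X u u" using lin(3) u v l by blast
      then show False using lin(2) u by blast
    qed
  qed
  show ?thesis using that A B C D E by blast
qed

definition C_of :: "nat pst \<Rightarrow> struc" where
  "C_of P = \<lparr>univ = vs P, edge = ed P, pred = (\<lambda>i. {x\<in>vs P. fst (pj P x) = i}), less = lx P\<rparr>"

lemma C_of_simps[simp]: "univ (C_of P) = vs P" "edge (C_of P) = ed P"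
  "pred (C_of P) i = {x\<in>vs P. fst (pj P x) = i}" "less (C_of P) = lx P"
  by (simp_all add: C_of_def)

lemma part_of_C:
  assumes w: "wfp n P" and x: "x \<in> vs P"
  shows "part_of (C_of P) x = {y\<in>vs P. fst (pj P y) = fst (pj P x)}"
proof -
  have "(x = y \<or> (\<not> ed P x y \<and> \<not> ed P y x)) \<longleftrightarrow> fst (pj P y) = fst (pj P x)" if y: "y \<in> vs P" for y
  proof
    assume "fst (pj P y) = fst (pj P x)"
    then show "x = y \<or> (\<not> ed P x y \<and> \<not> ed P y x)" using wfpD(3)[OF w x y] wfpD(3)[OF w y x] by metis
  next
    assume a: "x = y \<or> (\<not> ed P x y \<and> \<not> ed P y x)"
    show "fst (pj P y) = fst (pj P x)"
    proof (rule ccontr)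
      assume "fst (pj P y) \<noteq> fst (pj P x)"
      then have "ed P x y \<noteq> ed P y x" using wfpD(4)[OF w x y] by metis
      then show False using a by blast
    qed
  qed
  then show ?thesis unfolding part_of_def C_of_simps by blast
qed

lemma Kstar_C:
  assumes w: "wfp n P"
  shows "C_of P \<in> Kstar n"
  unfolding Kstar_def
proof (intro CollectI conjI ballI allI impI)
  show "finite (univ (C_of P))" using wfpD(1)[OF w] by simp
next
  show "complete_multipartite (C_of P)"
    unfolding complete_multipartite_def C_of_simps
  proof (intro conjI ballI impI)
    fix x assume x: "x \<in> vs P" show "\<not> ed P x x" using wfpD(3)[OF w x x] by blast
  next
    fix x y assume x: "x \<in> vs P" and y: "y \<in> vs P" and e: "ed P x y"
    show "\<not> ed P y x"
    proof
      assume e2: "ed P y x"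
      show False
      proof (cases "fst (pj P x) = fst (pj P y)")
        case True then show False using wfpD(3)[OF w x y] e by blast
      next
        case False then show False using wfpD(4)[OF w x y] e e2 by blast
      qed
    qed
  next
    fix x y z assume x: "x \<in> vs P" and y: "y \<in> vs P" and z: "z \<in> vs P"
      and a: "x = y \<or> (\<not> ed P x y \<and> \<not> ed P y x)" and b: "y = z \<or> (\<not> ed P y z \<and> \<not> ed P z y)"
    have "y \<in> part_of (C_of P) x" using a y unfolding part_of_def by simp
    then have 1: "fst (pj P y) = fst (pj P x)" using part_of_C[OF w x] by blast
    have "z \<in> part_of (C_of P) y" using b z unfolding part_of_def by simp
    then have 2: "fst (pj P z) = fst (pj P y)" using part_of_C[OF w y] by blast
    have "z \<in> part_of (C_of P) x" using part_of_C[OF w x] z 1 2 by simp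
    then show "x = z \<or> (\<not> ed P x z \<and> \<not> ed P z x)" unfolding part_of_def by simp
  qed
next
  fix i assume "i < n" then show "pred (C_of P) i \<subseteq> univ (C_of P)" by auto
next
  fix i j assume "i < n" "j < n" "i \<noteq> j"
  then show "pred (C_of P) i \<inter> pred (C_of P) j = {}" by auto
next
  fix i assume "i < n"
  show "pred (C_of P) i = {} \<or> (\<exists>x\<in>univ (C_of P). pred (C_of P) i = part_of (C_of P) x)"
  proof (cases "pred (C_of P) i = {}")
    case False
    then obtain x where x: "x \<in> vs P" "fst (pj P x) = i" by auto
    then have "pred (C_of P) i = part_of (C_of P) x" using part_of_C[OF w x(1)] by auto
    then show ?thesis using x by auto
  qed simp
next
  fix x assume x: "x \<in> univ (C_of P)"
  then have "fst (pj P x) < n" using wfpD(2)[OF w] by simp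
  moreover have "part_of (C_of P) x = pred (C_of P) (fst (pj P x))" using part_of_C[OF w] x by simp
  ultimately show "\<exists>i<n. part_of (C_of P) x = pred (C_of P) i" by blast
next
  fix x assume "x \<in> univ (C_of P)" then show "\<not> less (C_of P) x x" by (simp add: lx_def)
next
  fix x y z assume "x \<in> univ (C_of P)" "y \<in> univ (C_of P)" "z \<in> univ (C_of P)"
    "less (C_of P) x y" "less (C_of P) y z"
  then show "less (C_of P) x z"
    unfolding C_of_simps lx_def by auto
next
  fix x y assume "x \<in> univ (C_of P)" "y \<in> univ (C_of P)"
  show "x = y \<or> less (C_of P) x y \<or> less (C_of P) y x"
    unfolding C_of_simps lx_def by (metis linorder_neqE_nat prod_eqI)
next
  fix i j x y assume "i < n" "j < n" "i < j" "x \<in> pred (C_of P) i" "y \<in> pred (C_of P) j"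
  then show "less (C_of P) x y"
    by (auto simp: lx_def)
qed

lemma induced_simps[simp]: "univ (induced X S) = S" "edge (induced X S) = edge X"
  "less (induced X S) = less X" "pred (induced X S) i = pred X i \<inter> S"
  by (simp_all add: induced_def)

lemma ISO:
  fixes m :: nat and y :: "nat \<Rightarrow> nat" and P :: "nat pst" and \<sigma> :: "nat \<Rightarrow> nat" and r :: "nat \<Rightarrow> nat"
  assumes r: "bij_betw r (univ X) {..<m}" "\<forall>u\<in>univ X. \<forall>v\<in>univ X. less X u v \<longleftrightarrow> r u < r v"
    and pt: "\<forall>u\<in>univ X. pt u < n \<and> u \<in> pred X (pt u)" "\<forall>u\<in>univ X. \<forall>i<n. u \<in> pred X i \<longrightarrow> i = pt u"
       "\<forall>u\<in>univ X. \<forall>v\<in>univ X. less X u v \<longrightarrow> pt u \<le> pt v"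
    and y: "\<forall>j<m. y j \<in> vs P" "inj_on y {..<m}"
       "\<forall>j<m. pj P (y j) = (pt (inv_into (univ X) r j), \<sigma> j)"
       "\<forall>j<m. \<forall>j'<m. j < j' \<longrightarrow> \<sigma> j < \<sigma> j'"
       "\<forall>j<m. \<forall>j'<m. ed P (y j) (y j') = edge X (inv_into (univ X) r j) (inv_into (univ X) r j')"
  shows "y ` {..<m} \<in> binom n (C_of P) X"
proof -
  define en where "en = inv_into (univ X) r"
  have en1: "en j \<in> univ X" "r (en j) = j" if "j < m" for j
    using that r(1) unfolding en_def
    by (auto simp: bij_betw_def intro: inv_into_into f_inv_into_f)
  have en2: "en (r x) = x" "r x < m" if "x \<in> univ X" for x
    using that r(1) unfolding en_def bij_betw_def by (auto simp: inv_into_f_f)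
  define f where "f = y \<circ> r"
  have bij: "bij_betw f (univ X) (y ` {..<m})"
    unfolding f_def by (rule bij_betw_trans[OF r(1)]) (simp add: bij_betw_def y(2))
  have mono: "\<forall>j<m. \<forall>j'<m. j < j' \<longrightarrow> pt (en j) \<le> pt (en j') \<and> \<sigma> j < \<sigma> j'"
  proof (intro allI impI conjI)
    fix j j' assume j: "j < m" "j' < m" "j < j'"
    then have "less X (en j) (en j')" using r(2) en1 by metis
    then show "pt (en j) \<le> pt (en j')" using pt(3) en1 j by blast
    show "\<sigma> j < \<sigma> j'" using y(4) j by blast
  qed
  have pjy: "\<forall>j<m. pj P (y j) = (pt (en j), \<sigma> j)" using y(3) unfolding en_def .
  have "is_iso n X (induced (C_of P) (y ` {..<m})) f"
    unfolding is_iso_def induced_simps C_of_simps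
  proof (intro conjI ballI allI impI)
    show "bij_betw f (univ X) (y ` {..<m})" by (rule bij)
  next
    fix x x' assume x: "x \<in> univ X" and x': "x' \<in> univ X"
    show "edge X x x' = ed P (f x) (f x')"
      using y(5) en2[OF x] en2[OF x'] unfolding f_def en_def[symmetric] by simp
    have "lx P (y (r x)) (y (r x')) \<longleftrightarrow> r x < r x'"
      by (rule LX[where \<pi>="\<lambda>j. pt (en j)", OF pjy mono en2(2)[OF x] en2(2)[OF x']])
    then show "less X x x' = lx P (f x) (f x')" using r(2) x x' unfolding f_def by simp
  next
    fix i x assume i: "i < n" and x: "x \<in> univ X"
    have "f x \<in> vs P" using y(1) en2(2)[OF x] unfolding f_def by simp
    moreover have "fst (pj P (f x)) = pt x" using pjy en2[OF x] unfolding f_def by simp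
    moreover have "x \<in> pred X i \<longleftrightarrow> pt x = i" using pt(1,2) x i by metis
    moreover have "f x \<in> y ` {..<m}" using en2(2)[OF x] unfolding f_def by simp
    ultimately show "x \<in> pred X i \<longleftrightarrow> f x \<in> {x \<in> vs P. fst (pj P x) = i} \<inter> y ` {..<m}" by simp
  qed
  moreover have "y ` {..<m} \<subseteq> vs P" using y(1) by auto
  ultimately show ?thesis unfolding binom_def isomorphic_def by auto
qed

lemma sl_props:
  assumes "S \<in> nsets {..<M} c"
  shows "length (sorted_list_of_set S) = c" "set (sorted_list_of_set S) = S"
    "\<And>j j'. j < j' \<Longrightarrow> j' < c \<Longrightarrow> sorted_list_of_set S ! j < sorted_list_of_set S ! j'"
proof -
  have f: "finite S" and c: "card S = c" using assms unfolding nsets_def by auto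
  show l: "length (sorted_list_of_set S) = c" using c by simp
  show "set (sorted_list_of_set S) = S" using f by simp
  fix j j' :: nat assume "j < j'" "j' < c"
  then show "sorted_list_of_set S ! j < sorted_list_of_set S ! j'"
    using sorted_wrt_nth_less[OF strict_sorted_list_of_set[of S]] l by simp
qed

lemma inv_facts:
  assumes "bij_betw r V {..<m}"
  shows "\<And>j. j < m \<Longrightarrow> inv_into V r j \<in> V" "\<And>j. j < m \<Longrightarrow> r (inv_into V r j) = j"
    "\<And>x. x \<in> V \<Longrightarrow> inv_into V r (r x) = x" "\<And>x. x \<in> V \<Longrightarrow> r x < m"
  using assms by (auto simp: bij_betw_def intro: inv_into_into f_inv_into_f inv_into_f_f)

theorem main:
  assumes k: "k \<ge> 1" and A: "A \<in> Kstar n" and B: "B \<in> Kstar n"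
  shows "\<exists>C\<in>Kstar n. arrows n C B A k"
proof -
  define a where "a = card (univ A)"
  obtain rA where rA: "bij_betw rA (univ A) {..<a}" "\<forall>x\<in>univ A. \<forall>y\<in>univ A. less A x y \<longleftrightarrow> rA x < rA y"
    using rank_exists[OF KstarD[OF A]] unfolding a_def by blast
  define b where "b = card (univ B)"
  obtain rB where rB: "bij_betw rB (univ B) {..<b}" "\<forall>x\<in>univ B. \<forall>y\<in>univ B. less B x y \<longleftrightarrow> rB x < rB y"
    using rank_exists[OF KstarD[OF B]] unfolding b_def by blast
  obtain ptA where ptA: "\<forall>u\<in>univ A. ptA u < n \<and> u \<in> pred A (ptA u)"
    "\<forall>u\<in>univ A. \<forall>i<n. u \<in> pred A i \<longrightarrow> i = ptA u"
    "\<forall>u\<in>univ A. \<forall>v\<in>univ A. ptA u = ptA v \<longrightarrow> \<not> edge A u v"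
    "\<forall>u\<in>univ A. \<forall>v\<in>univ A. ptA u \<noteq> ptA v \<longrightarrow> edge A u v \<noteq> edge A v u"
    "\<forall>u\<in>univ A. \<forall>v\<in>univ A. less A u v \<longrightarrow> ptA u \<le> ptA v"
    by (rule Kstar_pt[OF A])
  obtain ptB where ptB: "\<forall>u\<in>univ B. ptB u < n \<and> u \<in> pred B (ptB u)"
    "\<forall>u\<in>univ B. \<forall>i<n. u \<in> pred B i \<longrightarrow> i = ptB u"
    "\<forall>u\<in>univ B. \<forall>v\<in>univ B. ptB u = ptB v \<longrightarrow> \<not> edge B u v"
    "\<forall>u\<in>univ B. \<forall>v\<in>univ B. ptB u \<noteq> ptB v \<longrightarrow> edge B u v \<noteq> edge B v u"
    "\<forall>u\<in>univ B. \<forall>v\<in>univ B. less B u v \<longrightarrow> ptB u \<le> ptB v"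
    by (rule Kstar_pt[OF B])
  define enA where "enA = inv_into (univ A) rA"
  define enB where "enB = inv_into (univ B) rB"
  note iA = inv_facts[OF rA(1), folded enA_def]
  note iB = inv_facts[OF rB(1), folded enB_def]
  define \<alpha>p where "\<alpha>p j = ptA (enA j)" for j
  define eA where "eA j j' = edge A (enA j) (enA j')" for j j'
  define \<beta>p where "\<beta>p j = ptB (enB j)" for j
  define eB where "eB j j' = edge B (enB j) (enB j')" for j j'
  have \<beta>p_lt: "\<beta>p u < n" if "u < b" for u using ptB(1) iB(1)[OF that] unfolding \<beta>p_def by blast
  have eB_same: "\<not> eB u u'" if "u < b" "u' < b" "\<beta>p u = \<beta>p u'" for u u'
    using ptB(3) iB(1) that unfolding \<beta>p_def eB_def by blast
  have eB_diff: "eB u u' \<noteq> eB u' u" if "u < b" "u' < b" "\<beta>p u \<noteq> \<beta>p u'" for u u'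
    using ptB(4) iB(1) that unfolding \<beta>p_def eB_def by blast
  have eA_same: "\<not> eA u u'" if "u < a" "u' < a" "\<alpha>p u = \<alpha>p u'" for u u'
    using ptA(3) iA(1) that unfolding \<alpha>p_def eA_def by blast
  have eA_diff: "eA u u' \<noteq> eA u' u" if "u < a" "u' < a" "\<alpha>p u \<noteq> \<alpha>p u'" for u u'
    using ptA(4) iA(1) that unfolding \<alpha>p_def eA_def by blast
  obtain M :: nat where M: "partn_lst {..<M} (replicate k b) a" using ramsey_full[of "replicate k b" a] by blast
  define sl where "sl S = sorted_list_of_set S" for S :: "nat set"
  have slp: "length (sl S) = c" "set (sl S) = S" "\<And>j j'. j < j' \<Longrightarrow> j' < c \<Longrightarrow> sl S ! j < sl S ! j'"
    if "S \<in> nsets {..<M} c" for S c using sl_props[OF that] unfolding sl_def by auto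
  define g where "g S j = (\<alpha>p j, sl S ! j)" for S j
  define T where "T S = g S ` {..<a}" for S
  define gi where "gi S d = (THE j. j < a \<and> g S j = d)" for S d
  define eT where "eT S d d' = eA (gi S d) (gi S d')" for S d d'
  have g_inj: "j = j'" if "S \<in> nsets {..<M} a" "j < a" "j' < a" "g S j = g S j'" for S j j'
  proof (rule ccontr)
    assume "j \<noteq> j'"
    then have "sl S ! j \<noteq> sl S ! j'" using slp(3)[OF that(1)] that(2,3) by (metis less_irrefl linorder_neqE_nat)
    then show False using that(4) unfolding g_def by simp
  qed
  have gi_g: "gi S (g S j) = j" if "S \<in> nsets {..<M} a" "j < a" for S j
    unfolding gi_def using g_inj[OF that(1) _ that(2)] that(2) by (intro the_equality) auto
  have goodT: "goodT (T S) (eT S)" if S: "S \<in> nsets {..<M} a" for S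
    unfolding goodT_def
  proof (intro conjI ballI impI)
    show "finite (T S)" unfolding T_def by simp
  next
    fix d d' assume d: "d \<in> T S" and d': "d' \<in> T S" and p: "fst d = fst d'"
    obtain j j' where j: "j < a" "d = g S j" "j' < a" "d' = g S j'" using d d' unfolding T_def by blast
    show "\<not> eT S d d'" using eA_same[OF j(1,3)] p unfolding j eT_def gi_g[OF S j(1)] gi_g[OF S j(3)] by (simp add: g_def)
  next
    fix d d' assume d: "d \<in> T S" and d': "d' \<in> T S" and p: "fst d \<noteq> fst d'"
    obtain j j' where j: "j < a" "d = g S j" "j' < a" "d' = g S j'" using d d' unfolding T_def by blast
    show "eT S d d' \<noteq> eT S d' d" using eA_diff[OF j(1,3)] p unfolding j eT_def gi_g[OF S j(1)] gi_g[OF S j(3)] by (simp add: g_def)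
  qed
  obtain Sl where Sl: "set Sl = nsets {..<M} a" using finite_list[OF finite_imp_finite_nsets[OF finite_lessThan]] by blast
  define TS where "TS = map (\<lambda>S. (T S, eT S)) Sl"
  have gTS: "\<forall>(T', eT')\<in>set TS. goodT T' eT'" using goodT Sl unfolding TS_def by auto
  define V0 where "V0 = {(sl H, u) | H u. H \<in> nsets {..<M} b \<and> u < b}"
  define P0 :: "(nat list \<times> nat) pst" where
    "P0 = \<lparr>vs = V0, pj = (\<lambda>(hs, u). (\<beta>p u, hs ! u)), ed = (\<lambda>(hs, u) (hs', u'). if hs = hs' then eB u u' else \<beta>p u < \<beta>p u')\<rparr>"
  have P0s: "vs P0 = V0" "pj P0 (hs, u) = (\<beta>p u, hs ! u)"
     "ed P0 (hs, u) (hs', u') = (if hs = hs' then eB u u' else \<beta>p u < \<beta>p u')" for hs u hs' u'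
    unfolding P0_def by simp_all
  have V0D: "\<exists>H u. x = (sl H, u) \<and> H \<in> nsets {..<M} b \<and> u < b" if "x \<in> V0" for x
    using that unfolding V0_def by blast
  have wP0: "wfp n P0"
    unfolding wfp_def P0s(1)
  proof (intro conjI ballI impI)
    have "V0 \<subseteq> (\<lambda>(H, u). (sl H, u)) ` (nsets {..<M} b \<times> {..<b})" unfolding V0_def by auto
    moreover have "finite (nsets {..<M} b \<times> {..<b})" using finite_imp_finite_nsets[OF finite_lessThan] by blast
    ultimately show "finite V0" using finite_surj by blast
  next
    fix x assume "x \<in> V0"
    then obtain H u where x: "x = (sl H, u)" "u < b" using V0D by blast
    show "fst (pj P0 x) < n" using \<beta>p_lt[OF x(2)] unfolding x P0s by simp
  next
    fix x y assume "x \<in> V0" "y \<in> V0" and p: "fst (pj P0 x) = fst (pj P0 y)"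
    then obtain H u H' u' where x: "x = (sl H, u)" "u < b" and y: "y = (sl H', u')" "u' < b" using V0D by metis
    have "\<beta>p u = \<beta>p u'" using p unfolding x y P0s by simp
    then show "\<not> ed P0 x y" using eB_same[OF x(2) y(2)] unfolding x y P0s by simp
  next
    fix x y assume "x \<in> V0" "y \<in> V0" and p: "fst (pj P0 x) \<noteq> fst (pj P0 y)"
    then obtain H u H' u' where x: "x = (sl H, u)" "u < b" and y: "y = (sl H', u')" "u' < b" using V0D by metis
    have "\<beta>p u \<noteq> \<beta>p u'" using p unfolding x y P0s by simp
    then show "ed P0 x y \<noteq> ed P0 y x" using eB_diff[OF x(2) y(2)] unfolding x y P0s by auto
  qed
  obtain P' :: "nat pst" where wP': "wfp n P'" and IT': "\<forall>\<chi>. (\<forall>(T', eT')\<in>set TS. bnd k \<chi> P' T' eT') \<longrightarrow>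
    (\<exists>\<Phi>\<in>Emb (rl P0) P'. \<forall>(T', eT')\<in>set TS. \<exists>c. \<forall>\<psi>\<in>Cp (rl P0) T' eT'. \<chi> (\<Phi> ` \<psi> ` T') = c)"
    using IT[OF gTS k, rule_format, OF wfp_rl[OF wP0]] by blast
  have "arrows n (C_of P') B A k"
    unfolding arrows_def
  proof (intro allI impI)
    fix c :: "nat set \<Rightarrow> nat" assume cb: "\<forall>S\<in>binom n (C_of P') A. c S < k"
    have CpB: "\<psi> ` T S \<in> binom n (C_of P') A" if S: "S \<in> nsets {..<M} a" and psi: "\<psi> \<in> Cp P' (T S) (eT S)" for S \<psi>
    proof -
      have psid: "\<forall>d\<in>T S. \<psi> d \<in> vs P' \<and> pj P' (\<psi> d) = d" "\<forall>d\<in>T S. \<forall>d'\<in>T S. ed P' (\<psi> d) (\<psi> d') = eT S d d'"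
        using psi unfolding Cp_def by blast+
      have gT: "g S j \<in> T S" if "j < a" for j using that unfolding T_def by blast
      have "(\<psi> \<circ> g S) ` {..<a} \<in> binom n (C_of P') A"
      proof (rule ISO[OF rA ptA(1,2,5), where \<sigma> = "\<lambda>j. sl S ! j"])
        show "\<forall>j<a. (\<psi> \<circ> g S) j \<in> vs P'" using psid(1) gT by simp
        show "inj_on (\<psi> \<circ> g S) {..<a}"
        proof
          fix j j' assume j: "j \<in> {..<a}" "j' \<in> {..<a}" "(\<psi> \<circ> g S) j = (\<psi> \<circ> g S) j'"
          then have "pj P' (\<psi> (g S j)) = pj P' (\<psi> (g S j'))" by simp
          moreover have "pj P' (\<psi> (g S j)) = g S j" "pj P' (\<psi> (g S j')) = g S j'"
            using psid(1) gT j(1,2) by auto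
          ultimately have "g S j = g S j'" by simp
          then show "j = j'" using g_inj[OF S] j by blast
        qed
        show "\<forall>j<a. pj P' ((\<psi> \<circ> g S) j) = (ptA (inv_into (univ A) rA j), sl S ! j)"
          using psid(1) gT unfolding g_def \<alpha>p_def enA_def by simp
        show "\<forall>j<a. \<forall>j'<a. j < j' \<longrightarrow> sl S ! j < sl S ! j'" using slp(3)[OF S] by blast
        show "\<forall>j<a. \<forall>j'<a. ed P' ((\<psi> \<circ> g S) j) ((\<psi> \<circ> g S) j') = edge A (inv_into (univ A) rA j) (inv_into (univ A) rA j')"
          using psid(2) gT gi_g[OF S] unfolding eT_def eA_def enA_def by simp
      qed
      moreover have "(\<psi> \<circ> g S) ` {..<a} = \<psi> ` T S" unfolding T_def by (simp add: image_comp)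
      ultimately show ?thesis by simp
    qed
    have bndTS: "\<forall>(T', eT')\<in>set TS. bnd k c P' T' eT'"
    proof
      fix TE assume "TE \<in> set TS"
      then obtain S where S: "S \<in> nsets {..<M} a" "TE = (T S, eT S)" using Sl unfolding TS_def by auto
      have "bnd k c P' (T S) (eT S)" unfolding bnd_def using CpB[OF S(1)] cb by blast
      then show "case TE of (T', eT') \<Rightarrow> bnd k c P' T' eT'" using S(2) by simp
    qed
    obtain \<Phi> where \<Phi>: "\<Phi> \<in> Emb (rl P0) P'" and mono: "\<forall>(T', eT')\<in>set TS. \<exists>c0. \<forall>\<psi>\<in>Cp (rl P0) T' eT'. c (\<Phi> ` \<psi> ` T') = c0"
      using IT' bndTS by blast
    have \<Phi>D: "inj_on \<Phi> (vs (rl P0))" "\<And>x. x \<in> vs (rl P0) \<Longrightarrow> \<Phi> x \<in> vs P'"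
      "\<And>x. x \<in> vs (rl P0) \<Longrightarrow> pj P' (\<Phi> x) = pj (rl P0) x"
      "\<And>x y. x \<in> vs (rl P0) \<Longrightarrow> y \<in> vs (rl P0) \<Longrightarrow> ed P' (\<Phi> x) (\<Phi> y) = ed (rl P0) x y"
      using \<Phi> unfolding Emb_def by auto
    define col where "col S = (if \<exists>\<psi>. \<psi> \<in> Cp (rl P0) (T S) (eT S)
       then c (\<Phi> ` (SOME \<psi>. \<psi> \<in> Cp (rl P0) (T S) (eT S)) ` T S) else 0)" for S
    have colk: "col \<in> nsets {..<M} a \<rightarrow> {..<length (replicate k b)}"
    proof
      fix S assume S: "S \<in> nsets {..<M} a"
      show "col S \<in> {..<length (replicate k b)}"
      proof (cases "\<exists>\<psi>. \<psi> \<in> Cp (rl P0) (T S) (eT S)")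
        case True
        then have "(SOME \<psi>. \<psi> \<in> Cp (rl P0) (T S) (eT S)) \<in> Cp (rl P0) (T S) (eT S)" by (rule someI_ex)
        then have "\<Phi> \<circ> (SOME \<psi>. \<psi> \<in> Cp (rl P0) (T S) (eT S)) \<in> Cp P' (T S) (eT S)" by (rule Emb_Cp[OF \<Phi>])
        then have "(\<Phi> \<circ> (SOME \<psi>. \<psi> \<in> Cp (rl P0) (T S) (eT S))) ` T S \<in> binom n (C_of P') A" by (rule CpB[OF S])
        then have "c (\<Phi> ` (SOME \<psi>. \<psi> \<in> Cp (rl P0) (T S) (eT S)) ` T S) < k" using cb by (simp add: image_comp)
        then show ?thesis using True by (simp add: col_def)
      next
        case False then show ?thesis using k by (simp add: col_def)
      qed
    qed
    obtain i H where i: "i < k" and H: "H \<in> nsets {..<M} b" and Hc: "col ` nsets H a \<subseteq> {i}"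
      using M colk unfolding partn_lst_def monochromatic_def by fastforce
    define \<beta>c where "\<beta>c u = to_nat (sl H, u::nat)" for u
    define yB where "yB u = \<Phi> (\<beta>c u)" for u :: nat
    have \<beta>c_in: "\<beta>c u \<in> vs (rl P0)" if "u < b" for u
    proof -
      have "(sl H, u) \<in> V0" using H that unfolding V0_def by blast
      then show ?thesis unfolding \<beta>c_def rl_simps P0s by blast
    qed
    have \<beta>c_pj: "pj (rl P0) (\<beta>c u) = (\<beta>p u, sl H ! u)" for u unfolding \<beta>c_def by (simp add: P0s)
    have \<beta>c_ed: "ed (rl P0) (\<beta>c u) (\<beta>c u') = eB u u'" for u u' unfolding \<beta>c_def by (simp add: P0s)
    have yB_pj: "pj P' (yB u) = (\<beta>p u, sl H ! u)" if "u < b" for u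
      unfolding yB_def using \<Phi>D(3)[OF \<beta>c_in[OF that]] \<beta>c_pj by simp
    have yB_ed: "ed P' (yB u) (yB u') = eB u u'" if "u < b" "u' < b" for u u'
      unfolding yB_def using \<Phi>D(4)[OF \<beta>c_in[OF that(1)] \<beta>c_in[OF that(2)]] \<beta>c_ed by simp
    have yB_inj: "inj_on yB {..<b}"
    proof
      fix u u' assume u: "u \<in> {..<b}" "u' \<in> {..<b}" "yB u = yB u'"
      then have "\<beta>c u = \<beta>c u'" using \<Phi>D(1) \<beta>c_in unfolding yB_def inj_on_def by blast
      then show "u = u'" unfolding \<beta>c_def by simp
    qed
    have \<beta>mono: "\<forall>u<b. \<forall>u'<b. u < u' \<longrightarrow> \<beta>p u \<le> \<beta>p u' \<and> sl H ! u < sl H ! u'"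
    proof (intro allI impI conjI)
      fix u u' assume u: "u < b" "u' < b" "u < u'"
      then have "less B (enB u) (enB u')" using rB(2) iB(1,2) by metis
      then show "\<beta>p u \<le> \<beta>p u'" using ptB(5) iB(1) u unfolding \<beta>p_def by blast
      show "sl H ! u < sl H ! u'" using slp(3)[OF H] u by blast
    qed
    have Bbin: "yB ` {..<b} \<in> binom n (C_of P') B"
    proof (rule ISO[OF rB ptB(1,2,5), where \<sigma> = "\<lambda>u. sl H ! u"])
      show "\<forall>j<b. yB j \<in> vs P'" unfolding yB_def using \<Phi>D(2) \<beta>c_in by blast
      show "inj_on yB {..<b}" by (rule yB_inj)
      show "\<forall>j<b. pj P' (yB j) = (ptB (inv_into (univ B) rB j), sl H ! j)"
        using yB_pj unfolding \<beta>p_def enB_def by simp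
      show "\<forall>j<b. \<forall>j'<b. j < j' \<longrightarrow> sl H ! j < sl H ! j'" using slp(3)[OF H] by blast
      show "\<forall>j<b. \<forall>j'<b. ed P' (yB j) (yB j') = edge B (inv_into (univ B) rB j) (inv_into (univ B) rB j')"
        using yB_ed unfolding eB_def enB_def by simp
    qed
    show "\<exists>B'\<in>binom n (C_of P') B. \<exists>j. \<forall>S\<in>binom n (induced (C_of P') B') A. c S = j"
    proof (intro bexI[OF _ Bbin] exI[of _ i] ballI)
      fix S'' assume S'': "S'' \<in> binom n (induced (C_of P') (yB ` {..<b})) A"
      then have S''sub: "S'' \<subseteq> yB ` {..<b}"
        and "isomorphic n A (induced (induced (C_of P') (yB ` {..<b})) S'')" unfolding binom_def by auto
      then obtain h where h: "is_iso n A (induced (induced (C_of P') (yB ` {..<b})) S'') h"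
        unfolding isomorphic_def by blast
      have hh: "bij_betw h (univ A) S'' \<and> (\<forall>x\<in>univ A. \<forall>y\<in>univ A. edge A x y \<longleftrightarrow> ed P' (h x) (h y)) \<and>
        (\<forall>x\<in>univ A. \<forall>y\<in>univ A. less A x y \<longleftrightarrow> lx P' (h x) (h y)) \<and>
        (\<forall>i<n. \<forall>x\<in>univ A. x \<in> pred A i \<longleftrightarrow> h x \<in> {z\<in>vs P'. fst (pj P' z) = i} \<inter> yB ` {..<b} \<inter> S'')"
        using h unfolding is_iso_def induced_simps C_of_simps .
      have hb: "bij_betw h (univ A) S''" using hh by (rule conjunct1)
      have he: "\<forall>x\<in>univ A. \<forall>y\<in>univ A. edge A x y \<longleftrightarrow> ed P' (h x) (h y)" using hh by (elim conjE)
      have hl: "\<forall>x\<in>univ A. \<forall>y\<in>univ A. less A x y \<longleftrightarrow> lx P' (h x) (h y)" using hh by (elim conjE)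
      have hp: "\<forall>i<n. \<forall>x\<in>univ A. x \<in> pred A i \<longleftrightarrow> h x \<in> {z\<in>vs P'. fst (pj P' z) = i} \<inter> yB ` {..<b} \<inter> S''"
        using hh by (elim conjE)
      have hA: "h x \<in> S''" if "x \<in> univ A" for x using bij_betwE[OF hb] that by blast
      define \<theta> where "\<theta> j = (THE u. u < b \<and> yB u = h (enA j))" for j
      have \<theta>: "\<theta> j < b \<and> yB (\<theta> j) = h (enA j)" if j: "j < a" for j
      proof -
        have "h (enA j) \<in> yB ` {..<b}" using hA[OF iA(1)[OF j]] S''sub by (rule subsetD[rotated])
        then obtain u where u: "u < b" "yB u = h (enA j)" by (auto simp: image_iff)
        have uniq: "u' = u" if "u' < b \<and> yB u' = h (enA j)" for u'
          using inj_onD[OF yB_inj, of u' u] that u by simp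
        have "\<theta> j = u" unfolding \<theta>_def
          by (rule the_equality) (use u uniq in blast)+
        then show ?thesis using u by simp
      qed
      have \<theta>e: "eB (\<theta> j) (\<theta> j') = eA j j'" if "j < a" "j' < a" for j j'
      proof -
        have tj: "\<theta> j < b" "yB (\<theta> j) = h (enA j)" "\<theta> j' < b" "yB (\<theta> j') = h (enA j')"
          using \<theta>[OF that(1)] \<theta>[OF that(2)] by auto
        have "eB (\<theta> j) (\<theta> j') = ed P' (yB (\<theta> j)) (yB (\<theta> j'))" using yB_ed[OF tj(1) tj(3)] by simp
        also have "\<dots> = ed P' (h (enA j)) (h (enA j'))" using tj(2,4) by simp
        also have "\<dots> = eA j j'" using he iA(1) that unfolding eA_def by simp
        finally show ?thesis .
      qed
      have \<theta>p: "\<beta>p (\<theta> j) = \<alpha>p j" if j: "j < a" for j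
      proof -
        have "enA j \<in> pred A (ptA (enA j))" "ptA (enA j) < n" using ptA(1) iA(1)[OF j] by blast+
        then have "h (enA j) \<in> {z\<in>vs P'. fst (pj P' z) = ptA (enA j)}" using hp iA(1)[OF j] by blast
        moreover have tj: "\<theta> j < b" "yB (\<theta> j) = h (enA j)" using \<theta>[OF j] by auto
        ultimately have "fst (pj P' (yB (\<theta> j))) = \<alpha>p j" unfolding \<alpha>p_def by simp
        moreover have "pj P' (yB (\<theta> j)) = (\<beta>p (\<theta> j), sl H ! \<theta> j)" by (rule yB_pj[OF tj(1)])
        ultimately show ?thesis by simp
      qed
      have \<theta>m: "\<theta> j < \<theta> j'" if "j < j'" "j' < a" for j j'
      proof -
        have ja: "j < a" using that by simp
        have "less A (enA j) (enA j')" using rA(2) iA(1,2) that ja by metis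
        then have "lx P' (h (enA j)) (h (enA j'))" using hl iA(1) ja that(2) by blast
        then have "lx P' (yB (\<theta> j)) (yB (\<theta> j'))" using \<theta> ja that(2) by simp
        then show ?thesis using LX[where \<pi>=\<beta>p and \<sigma>="\<lambda>u. sl H ! u" and y=yB, OF _ \<beta>mono] yB_pj \<theta> ja that(2) by blast
      qed
      define \<sigma> where "\<sigma> j = sl H ! \<theta> j" for j
      have \<sigma>m: "\<sigma> j < \<sigma> j'" if "j < j'" "j' < a" for j j'
        using slp(3)[OF H] \<theta>m[OF that] \<theta> that unfolding \<sigma>_def by (meson order.strict_trans)
      define S where "S = \<sigma> ` {..<a}"
      have ss: "strict_sorted (map \<sigma> [0..<a])"
        unfolding sorted_wrt_iff_nth_less using \<sigma>m by simp
      have slS: "sl S = map \<sigma> [0..<a]"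
      proof -
        have "set (map \<sigma> [0..<a]) = S" unfolding S_def by auto
        then show ?thesis unfolding sl_def using sorted_list_of_set.idem_if_sorted_distinct ss
          by (metis strict_sorted_iff)
      qed
      have SH: "S \<in> nsets H a"
      proof -
        have "S \<subseteq> H" unfolding S_def \<sigma>_def using slp(1,2)[OF H] \<theta> by auto
        moreover have "card S = a"
          using distinct_card[of "map \<sigma> [0..<a]"] ss unfolding S_def by (simp add: strict_sorted_iff atLeast0LessThan)
        ultimately show ?thesis unfolding nsets_def S_def by auto
      qed
      have SM: "S \<in> nsets {..<M} a" using SH H unfolding nsets_def by auto
      have gS: "g S j = (\<beta>p (\<theta> j), sl H ! \<theta> j)" if "j < a" for j
        unfolding g_def slS using that \<theta>p[OF that] by (simp add: \<sigma>_def)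
      define \<psi> where "\<psi> d = \<beta>c (\<theta> (gi S d))" for d
      have psiCp: "\<psi> \<in> Cp (rl P0) (T S) (eT S)"
        unfolding Cp_def
      proof (intro CollectI conjI ballI)
        fix d assume "d \<in> T S"
        then obtain j where j: "j < a" "d = g S j" unfolding T_def by blast
        have "\<psi> d = \<beta>c (\<theta> j)" unfolding \<psi>_def j gi_g[OF SM j(1)] ..
        then show "\<psi> d \<in> vs (rl P0)" "pj (rl P0) (\<psi> d) = d"
          using \<beta>c_in \<theta>[OF j(1)] \<beta>c_pj gS[OF j(1)] j(2) by simp_all
      next
        fix d d' assume "d \<in> T S" "d' \<in> T S"
        then obtain j j' where j: "j < a" "d = g S j" "j' < a" "d' = g S j'" unfolding T_def by blast
        have "\<psi> d = \<beta>c (\<theta> j)" "\<psi> d' = \<beta>c (\<theta> j')" unfolding \<psi>_def j gi_g[OF SM j(1)] gi_g[OF SM j(3)] by simp_all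
        then show "ed (rl P0) (\<psi> d) (\<psi> d') = eT S d d'"
          using \<beta>c_ed \<theta>e[OF j(1,3)] unfolding eT_def j gi_g[OF SM j(1)] gi_g[OF SM j(3)] by simp
      qed
      have img: "\<Phi> ` \<psi> ` T S = S''"
      proof -
        have "\<Phi> ` \<psi> ` T S = (\<lambda>j. \<Phi> (\<psi> (g S j))) ` {..<a}" unfolding T_def by (simp add: image_image)
        also have "\<dots> = (\<lambda>j. h (enA j)) ` {..<a}"
        proof (rule image_cong[OF refl])
          fix j assume "j \<in> {..<a}"
          then have j: "j < a" by simp
          have "\<psi> (g S j) = \<beta>c (\<theta> j)" unfolding \<psi>_def gi_g[OF SM j] ..
          then show "\<Phi> (\<psi> (g S j)) = h (enA j)" using \<theta>[OF j] unfolding yB_def by simp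
        qed
        also have "\<dots> = h ` enA ` {..<a}" by (simp add: image_image)
        also have "enA ` {..<a} = univ A"
        proof
          show "enA ` {..<a} \<subseteq> univ A" using iA(1) by auto
          show "univ A \<subseteq> enA ` {..<a}"
          proof
            fix x assume "x \<in> univ A"
            then show "x \<in> enA ` {..<a}" using iA(3,4) by (metis imageI lessThan_iff)
          qed
        qed
        also have "h ` univ A = S''" using hb unfolding bij_betw_def by blast
        finally show ?thesis .
      qed
      have TSin: "(T S, eT S) \<in> set TS" using SM Sl unfolding TS_def by auto
      obtain c0 where c0: "\<forall>\<psi>\<in>Cp (rl P0) (T S) (eT S). c (\<Phi> ` \<psi> ` T S) = c0" using mono TSin by fastforce
      have ex: "\<exists>\<psi>. \<psi> \<in> Cp (rl P0) (T S) (eT S)" using psiCp by blast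
      have "col S = c0"
        using c0 someI_ex[OF ex] ex unfolding col_def by simp
      moreover have "col S = i" using Hc SH by blast
      moreover have "c S'' = c0" using c0 psiCp img by blast
      ultimately show "c S'' = i" by simp
    qed
  qed
  then show ?thesis using Kstar_C[OF wP'] by blast
qed


theorem theorem8p3:
  fixes n :: nat
  assumes "n \<ge> 1"
  shows "ramsey_property n (Kstar n)"
  unfolding ramsey_property_def using main by blast

end
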